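(* Let \(F_o\in\mathcal M\) be such that \((F_o,W)\) is split over \(\mathbb R\), and suppose that \(\beta:(a,\infty)\to\mathfrak h\) is a differentiable function satisfying the Lax equation \[\frac{d\beta}{dy}=-[\beta(y),L\beta(y)].\] Then there exist a function \(h:(a,\infty)\to H\), an element \(\tilde N\in\mathfrak h\) and a point \(\tilde F\in\check{\mathcal M}\) such that (a) \(h^{-1}(y)\frac{dh}{dy}=-L\beta(y)\) and \(\beta(y)=\mathrm{Ad}(h^{-1}(y))\tilde N\); (b) \(h(y).F_o=e^{iy\tilde N}.\tilde F\).
   Context: \(V_{\mathbb Q}\) finite-dimensional over \(\mathbb Q\), \(V=V_{\mathbb Q}\otimes\mathbb C\), \(W\) an increasing rational filtration, \(Q=\{Q_k\}\) nondegenerate rational bilinear forms on \(Gr^W_k\) of parity \((-1)^k\); \(\mathcal M\) the set of decreasing filtrations (fixed \(\dim F^p\)) with \((F,W)\) a mixed Hodge structure graded-polarized by \(Q\). \(G=\{g\in GL(V):g\text{ preserves }W,\ Gr(g)\text{ real automorphism of }Q\}\); \(G_{\mathbb C}\) analogous with complex automorphisms, \(\mathfrak g_{\mathbb C}=\mathrm{Lie}(G_{\mathbb C})\), \(\check{\mathcal M}\) the \(G_{\mathbb C}\)-orbit of \(\mathcal M\). \(H=\{g\in G: g\text{ induces real automorphisms of }W_k/W_{k-2}\ \forall k\}\), \(\mathfrak h=\mathrm{Lie}(H)\). Deligne bigrading of \((F_o,W)\): unique \(V=\bigoplus I^{p,q}\) with \(F_o^p=\bigoplus_{a\ge p}I^{a,b}\),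 \(W_k=\bigoplus_{a+b\le k}I^{a,b}\), \(\overline{I^{p,q}}\equiv I^{q,p}\bmod\bigoplus_{r<q,s<p}I^{r,s}\) (split over \(\mathbb R\): equality). \(\mathfrak g^{r,s}_{\mathbb C}\) = elements of \(\mathfrak g_{\mathbb C}\) mapping \(I^{p,q}\) into \(I^{p+r,q+s}\); \(\eta_+=\bigoplus_{r\ge0,s<0}\mathfrak g^{r,s}_{\mathbb C}\), \(\eta_0=\mathfrak g^{0,0}_{\mathbb C}\), \(\eta_-=\bigoplus_{r<0,s\ge0}\mathfrak g^{r,s}_{\mathbb C}\), \(\Lambda=\bigoplus_{r,s<0}\mathfrak g^{r,s}_{\mathbb C}\), so \(\mathfrak g_{\mathbb C}=\eta_+\oplus\eta_0\oplus\eta_-\oplus\Lambda\). \(L\) is the endomorphism acting as \(+i\) on \(\eta_+\), \(0\) on \(\eta_0\), \(-i\) on \(\eta_-\oplus\Lambda\); it restricts to an endomorphism of \(\mathfrak h\). *)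

theory Defs
  imports "HOL-Analysis.Analysis"
begin

text \<open>The rational vector space V_Q is modelled (after choice of a Q-basis) as Q^n, and
  V = V_Q (x) C as complex^'n, 'n a finite index type.  Complex subspaces are the
  subspaces of the library vector space interpretation vec over scalar
  multiplication (*s).  Endomorphisms of V are matrices complex^'n^'n.\<close>

definition cnjv :: "complex^'n \<Rightarrow> complex^'n" where
  "cnjv v = (\<chi> i. cnj (v $ i))"

definition cnjS :: "(complex^'n) set \<Rightarrow> (complex^'n) set" where
  "cnjS S = cnjv ` S"

definition setplus :: "(complex^'n) set \<Rightarrow> (complex^'n) set \<Rightarrow> (complex^'n) set" where
  "setplus A B = {x + y | x y. x \<in> A \<and> y \<in> B}"

definition rational_vec :: "complex^'n \<Rightarrow> bool" where
  "rational_vec v \<longleftrightarrow> (\<forall>i. v $ i \<in> \<rat>)"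

text \<open>A subspace of V defined over Q (spanned by rational vectors).\<close>
definition rational_subspace :: "(complex^'n) set \<Rightarrow> bool" where
  "rational_subspace S \<longleftrightarrow> vec.subspace S \<and> S = vec.span (S \<inter> {v. rational_vec v})"

text \<open>Increasing rational filtration (finite: exhaustive and separated).\<close>
definition rational_inc_filtration :: "(int \<Rightarrow> (complex^'n) set) \<Rightarrow> bool" where
  "rational_inc_filtration W \<longleftrightarrow>
     (\<forall>k. rational_subspace (W k) \<and> W k \<subseteq> W (k + 1)) \<and>
     (\<exists>a b. W a = {0} \<and> W b = UNIV)"

text \<open>Decreasing filtration (finite: exhaustive and separated).\<close>
definition dec_filtration :: "(int \<Rightarrow> (complex^'n) set) \<Rightarrow> bool" where
  "dec_filtration F \<longleftrightarrow>
     (\<forall>p. vec.subspace (F p) \<and> F (p + 1) \<subseteq> F p) \<and>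
     (\<exists>a b. F a = UNIV \<and> F b = {0})"

definition cbilinear :: "(complex^'n \<Rightarrow> complex^'n \<Rightarrow> complex) \<Rightarrow> bool" where
  "cbilinear B \<longleftrightarrow>
     (\<forall>c x x' y. B (c *s x + x') y = c * B x y + B x' y) \<and>
     (\<forall>c x y y'. B x (c *s y + y') = c * B x y + B x y')"

text \<open>Q k is a bilinear form on V whose restriction to W_k x W_k descends to a
  nondegenerate rational bilinear form on Gr^W_k = W_k / W_(k-1) of parity (-1)^k.\<close>
definition graded_polarization ::
  "(int \<Rightarrow> (complex^'n) set) \<Rightarrow> (int \<Rightarrow> complex^'n \<Rightarrow> complex^'n \<Rightarrow> complex) \<Rightarrow> bool" where
  "graded_polarization W Q \<longleftrightarrow> (\<forall>k.
     cbilinear (Q k) \<and>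
     (\<forall>x\<in>W k. \<forall>y\<in>W (k - 1). Q k x y = 0 \<and> Q k y x = 0) \<and>
     (\<forall>x\<in>W k. (\<forall>y\<in>W k. Q k x y = 0) \<longrightarrow> x \<in> W (k - 1)) \<and>
     (\<forall>x\<in>W k. \<forall>y\<in>W k. rational_vec x \<longrightarrow> rational_vec y \<longrightarrow> Q k x y \<in> \<rat>) \<and>
     (\<forall>x\<in>W k. \<forall>y\<in>W k. Q k y x = (if even k then 1 else -1) * Q k x y))"

text \<open>Preimage in W_k of the subspace F^p Gr^W_k.\<close>
definition grF :: "(int \<Rightarrow> (complex^'n) set) \<Rightarrow> (int \<Rightarrow> (complex^'n) set) \<Rightarrow> int \<Rightarrow> int \<Rightarrow> (complex^'n) set" where
  "grF W F k p = setplus (F p \<inter> W k) (W (k - 1))"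

text \<open>(F,W) is a mixed Hodge structure graded-polarized by Q: on every Gr^W_k the
  filtration induced by F is a pure Hodge structure of weight k polarized by Q_k.\<close>
definition is_gpmhs ::
  "(int \<Rightarrow> (complex^'n) set) \<Rightarrow> (int \<Rightarrow> complex^'n \<Rightarrow> complex^'n \<Rightarrow> complex) \<Rightarrow>
   (int \<Rightarrow> (complex^'n) set) \<Rightarrow> bool" where
  "is_gpmhs W Q F \<longleftrightarrow> (\<forall>k p.
     setplus (grF W F k p) (cnjS (grF W F k (k - p + 1))) = W k \<and>
     grF W F k p \<inter> cnjS (grF W F k (k - p + 1)) = W (k - 1) \<and>
     (\<forall>x\<in>grF W F k p. \<forall>y\<in>grF W F k (k - p + 1). Q k x y = 0) \<and>
     (\<forall>x\<in>grF W F k p \<inter> cnjS (grF W F k (k - p)). x \<notin> W (k - 1) \<longrightarrow>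
        Im (\<i> powi (2 * p - k) * Q k x (cnjv x)) = 0 \<and>
        Re (\<i> powi (2 * p - k) * Q k x (cnjv x)) > 0))"

text \<open>The classifying space M (fixed dimensions d p = dim F^p).\<close>
definition Mset ::
  "(int \<Rightarrow> (complex^'n) set) \<Rightarrow> (int \<Rightarrow> complex^'n \<Rightarrow> complex^'n \<Rightarrow> complex) \<Rightarrow> (int \<Rightarrow> nat) \<Rightarrow>
   (int \<Rightarrow> (complex^'n) set) set" where
  "Mset W Q d = {F. dec_filtration F \<and> (\<forall>p. vec.dim (F p) = d p) \<and> is_gpmhs W Q F}"

definition act :: "complex^'n^'n \<Rightarrow> (int \<Rightarrow> (complex^'n) set) \<Rightarrow> (int \<Rightarrow> (complex^'n) set)" where
  "act g F = (\<lambda>p. (\<lambda>v. g *v v) ` F p)"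

text \<open>The group G_C, G and H.\<close>
definition GCgrp ::
  "(int \<Rightarrow> (complex^'n) set) \<Rightarrow> (int \<Rightarrow> complex^'n \<Rightarrow> complex^'n \<Rightarrow> complex) \<Rightarrow> (complex^'n^'n) set" where
  "GCgrp W Q = {g. invertible g \<and> (\<forall>k. (\<forall>x\<in>W k. g *v x \<in> W k) \<and>
      (\<forall>x\<in>W k. \<forall>y\<in>W k. Q k (g *v x) (g *v y) = Q k x y))}"

definition Ggrp ::
  "(int \<Rightarrow> (complex^'n) set) \<Rightarrow> (int \<Rightarrow> complex^'n \<Rightarrow> complex^'n \<Rightarrow> complex) \<Rightarrow> (complex^'n^'n) set" where
  "Ggrp W Q = {g \<in> GCgrp W Q. \<forall>k. \<forall>x\<in>W k. cnjv (g *v x) - g *v cnjv x \<in> W (k - 1)}"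

definition Hgrp ::
  "(int \<Rightarrow> (complex^'n) set) \<Rightarrow> (int \<Rightarrow> complex^'n \<Rightarrow> complex^'n \<Rightarrow> complex) \<Rightarrow> (complex^'n^'n) set" where
  "Hgrp W Q = {g \<in> Ggrp W Q. \<forall>k. \<forall>x\<in>W k. cnjv (g *v x) - g *v cnjv x \<in> W (k - 2)}"

text \<open>Lie algebras g_C = Lie(G_C) and h = Lie(H), written out as sets of matrices.\<close>
definition gClie ::
  "(int \<Rightarrow> (complex^'n) set) \<Rightarrow> (int \<Rightarrow> complex^'n \<Rightarrow> complex^'n \<Rightarrow> complex) \<Rightarrow> (complex^'n^'n) set" where
  "gClie W Q = {X. \<forall>k. (\<forall>x\<in>W k. X *v x \<in> W k) \<and>
      (\<forall>x\<in>W k. \<forall>y\<in>W k. Q k (X *v x) y + Q k x (X *v y) = 0)}"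

definition hlie ::
  "(int \<Rightarrow> (complex^'n) set) \<Rightarrow> (int \<Rightarrow> complex^'n \<Rightarrow> complex^'n \<Rightarrow> complex) \<Rightarrow> (complex^'n^'n) set" where
  "hlie W Q = {X \<in> gClie W Q. \<forall>k. \<forall>x\<in>W k. cnjv (X *v x) - X *v cnjv x \<in> W (k - 2)}"

text \<open>The G_C-orbit of M.\<close>
definition Mcheck ::
  "(int \<Rightarrow> (complex^'n) set) \<Rightarrow> (int \<Rightarrow> complex^'n \<Rightarrow> complex^'n \<Rightarrow> complex) \<Rightarrow> (int \<Rightarrow> nat) \<Rightarrow>
   (int \<Rightarrow> (complex^'n) set) set" where
  "Mcheck W Q d = {act g F | g F. g \<in> GCgrp W Q \<and> F \<in> Mset W Q d}"

text \<open>Bigradings.\<close>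
definition bsupp :: "(int \<Rightarrow> int \<Rightarrow> (complex^'n) set) \<Rightarrow> (int \<times> int) set" where
  "bsupp I = {(p, q). I p q \<noteq> {0}}"

definition is_bigrading :: "(int \<Rightarrow> int \<Rightarrow> (complex^'n) set) \<Rightarrow> bool" where
  "is_bigrading I \<longleftrightarrow> (\<forall>p q. vec.subspace (I p q)) \<and> finite (bsupp I) \<and>
     (\<forall>v. \<exists>!x. (\<forall>p q. x (p, q) \<in> I p q) \<and> v = sum x (bsupp I))"

text \<open>Sum of the I^{a,b} over the (a,b) satisfying P.\<close>
definition bigsum :: "(int \<Rightarrow> int \<Rightarrow> (complex^'n) set) \<Rightarrow> (int \<Rightarrow> int \<Rightarrow> bool) \<Rightarrow> (complex^'n) set" where
  "bigsum I P = {sum x (bsupp I) | x. (\<forall>a b. x (a, b) \<in> I a b) \<and> (\<forall>a b. \<not> P a b \<longrightarrow> x (a, b) = 0)}"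

text \<open>I is the Deligne bigrading of (F,W).\<close>
definition deligne_bigrading ::
  "(int \<Rightarrow> (complex^'n) set) \<Rightarrow> (int \<Rightarrow> (complex^'n) set) \<Rightarrow> (int \<Rightarrow> int \<Rightarrow> (complex^'n) set) \<Rightarrow> bool" where
  "deligne_bigrading F W I \<longleftrightarrow> is_bigrading I \<and>
     (\<forall>p. F p = bigsum I (\<lambda>a b. a \<ge> p)) \<and>
     (\<forall>k. W k = bigsum I (\<lambda>a b. a + b \<le> k)) \<and>
     (\<forall>p q. cnjS (I p q) \<subseteq> setplus (I q p) (bigsum I (\<lambda>r s. r < q \<and> s < p)))"

text \<open>The Deligne bigrading is split over R.\<close>
definition split_over_R :: "(int \<Rightarrow> int \<Rightarrow> (complex^'n) set) \<Rightarrow> bool" where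
  "split_over_R I \<longleftrightarrow> (\<forall>p q. cnjS (I p q) = I q p)"

text \<open>Projection onto I^{p,q} along the other summands.\<close>
definition bproj :: "(int \<Rightarrow> int \<Rightarrow> (complex^'n) set) \<Rightarrow> int \<Rightarrow> int \<Rightarrow> complex^'n \<Rightarrow> complex^'n" where
  "bproj I p q v = (THE x. (\<forall>a b. x (a, b) \<in> I a b) \<and> v = sum x (bsupp I)) (p, q)"

text \<open>Eigenvalue of L on g^{r,s}: +i on eta_+ (r>=0, s<0), 0 on eta_0, -i on
  eta_- + Lambda (r<0). Components with r,s>=0, (r,s)<>(0,0) vanish on g_C.\<close>
definition Lcoef :: "int \<Rightarrow> int \<Rightarrow> complex" where
  "Lcoef r s = (if 0 \<le> r \<and> s < 0 then \<i> else if r < 0 then - \<i> else 0)"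

text \<open>L X = sum over (r,s) of Lcoef r s times the (r,s)-component X^{r,s} of X,
  where X^{r,s} = sum_{p,q} pi_{p+r,q+s} X pi_{p,q}.\<close>
definition Lop :: "(int \<Rightarrow> int \<Rightarrow> (complex^'n) set) \<Rightarrow> complex^'n^'n \<Rightarrow> complex^'n^'n" where
  "Lop I X = matrix (\<lambda>v. \<Sum>pq\<in>bsupp I. \<Sum>pq'\<in>bsupp I.
      Lcoef (fst pq' - fst pq) (snd pq' - snd pq) *s
        bproj I (fst pq') (snd pq') (X *v bproj I (fst pq) (snd pq) v))"

definition lie_bracket :: "complex^'n^'n \<Rightarrow> complex^'n^'n \<Rightarrow> complex^'n^'n" where
  "lie_bracket X Y = X ** Y - Y ** X"

definition cscaleM :: "complex \<Rightarrow> complex^'n^'n \<Rightarrow> complex^'n^'n" where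
  "cscaleM c A = (\<chi> i j. c * A $ i $ j)"

definition matpow :: "complex^'n^'n \<Rightarrow> nat \<Rightarrow> complex^'n^'n" where
  "matpow A k = ((\<lambda>B. A ** B) ^^ k) (mat 1)"

text \<open>Matrix exponential, defined by its power series (entrywise).\<close>
definition mexp :: "complex^'n^'n \<Rightarrow> complex^'n^'n" where
  "mexp A = (\<chi> i j. (\<Sum>k. (matpow A k) $ i $ j / of_nat (fact k)))"

end

theory Submission
  imports Defs
begin

(* ---- PartA ---- *)
lemma cvec_linearI:
  fixes f :: "complex^'n \<Rightarrow> complex^'m"
  assumes "\<And>x y. f (x + y) = f x + f y" "\<And>c x. f (c *s x) = c *s f x"
  shows "Vector_Spaces.linear (*s) (*s) f"
  using assms by (unfold_locales) auto

lemma mv_scale: "(A::complex^'n^'m) *v (c *s x) = c *s (A *v x)"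
  by (simp add: matrix_vector_mult_def vec_eq_iff sum_distrib_left mult_ac)

lemma mv_sum: "(A::complex^'n^'m) *v (sum f S) = (\<Sum>i\<in>S. A *v f i)"
  by (induction S rule: infinite_finite_induct) (auto simp: matrix_vector_right_distrib)

section \<open>bilinear forms\<close>

lemma cbil:
  assumes "cbilinear B"
  shows cbil_0l: "B 0 y = 0" and cbil_0r: "B x 0 = 0"
    and cbil_addl: "B (x + x') y = B x y + B x' y"
    and cbil_addr: "B x (y + y') = B x y + B x y'"
    and cbil_scalel: "B (c *s x) y = c * B x y"
    and cbil_scaler: "B x (c *s y) = c * B x y"
proof -
  have l: "B (c *s x + x') y = c * B x y + B x' y" for c x x' y
    using assms unfolding cbilinear_def by blast
  have r: "B x (c *s y + y') = c * B x y + B x y'" for c x y y'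
    using assms unfolding cbilinear_def by blast
  show l0: "B 0 y = 0" for y
    using l[of 1 0 0 y] by simp
  show r0: "B x 0 = 0" for x
    using r[of x 1 0 0] by simp
  show "B (x + x') y = B x y + B x' y" using l[of 1 x x' y] by simp
  show "B x (y + y') = B x y + B x y'" using r[of x 1 y y'] by simp
  show "B (c *s x) y = c * B x y" using l[of c x 0 y] l0 by simp
  show "B x (c *s y) = c * B x y" using r[of x c y 0] r0 by simp
qed

lemma cbil_neg:
  assumes "cbilinear B"
  shows cbil_negl: "B (- x) y = - B x y" and cbil_negr: "B x (- y) = - B x y"
    and cbil_diffl: "B (x - x') y = B x y - B x' y" and cbil_diffr: "B x (y - y') = B x y - B x y'"
proof -
  have nl: "B (- u) v = - B u v" for u v
    using cbil_scalel[OF assms, of "-1" u v] by simp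
  have nr: "B u (- v) = - B u v" for u v
    using cbil_scaler[OF assms, of u "-1" v] by simp
  show "B (- x) y = - B x y" "B x (- y) = - B x y" using nl nr by auto
  show "B (x - x') y = B x y - B x' y" using cbil_addl[OF assms, of x "- x'"] nl by simp
  show "B x (y - y') = B x y - B x y'" using cbil_addr[OF assms, of x y "- y'"] nr by simp
qed

lemma cbil_suml:
  assumes "cbilinear B" shows "B (sum f S) y = (\<Sum>i\<in>S. B (f i) y)"
  by (induction S rule: infinite_finite_induct) (auto simp: cbil_0l[OF assms] cbil_addl[OF assms])

lemma cbil_sumr:
  assumes "cbilinear B" shows "B x (sum f S) = (\<Sum>i\<in>S. B x (f i))"
  by (induction S rule: infinite_finite_induct) (auto simp: cbil_0r[OF assms] cbil_addr[OF assms])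

section \<open>conjugation\<close>

lemma cnjv_simps[simp]:
  "cnjv (x + y) = cnjv x + cnjv y" "cnjv 0 = 0" "cnjv (x - y) = cnjv x - cnjv y"
  "cnjv (- x) = - cnjv x" "cnjv (c *s x) = cnj c *s cnjv x" "cnjv (cnjv x) = x"
  "cnjv (r *\<^sub>R x) = r *\<^sub>R cnjv x"
  by (auto simp: cnjv_def vec_eq_iff)

lemma cnjv_sum: "cnjv (sum f S) = (\<Sum>i\<in>S. cnjv (f i))"
  by (induction S rule: infinite_finite_induct) auto

lemma cnjv_nth[simp]: "cnjv x $ i = cnj (x $ i)"
  by (simp add: cnjv_def)


section \<open>bigradings\<close>

definition bdec :: "(int \<Rightarrow> int \<Rightarrow> (complex^'n) set) \<Rightarrow> complex^'n \<Rightarrow> int \<times> int \<Rightarrow> complex^'n" where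
  "bdec I v = (THE x. (\<forall>a b. x (a, b) \<in> I a b) \<and> v = sum x (bsupp I))"

lemma bproj_bdec: "bproj I p q v = bdec I v (p, q)"
  unfolding bproj_def bdec_def ..

lemma sum_single:
  assumes "finite S" "\<And>x. x \<in> S \<Longrightarrow> x \<noteq> z \<Longrightarrow> g x = 0" "z \<notin> S \<Longrightarrow> g z = 0"
  shows "sum g S = g z"
proof (cases "z \<in> S")
  case True
  then have "sum g S = g z + sum g (S - {z})" using assms(1) by (simp add: sum.remove)
  also have "sum g (S - {z}) = 0" using assms(2) by (intro sum.neutral) auto
  finally show ?thesis by simp
next
  case False then show ?thesis using assms by (auto intro!: sum.neutral)
qed


context
  fixes I :: "int \<Rightarrow> int \<Rightarrow> (complex^'n) set"
  assumes BG: "is_bigrading I"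
begin

lemma bg_sub: "vec.subspace (I a b)"
  using BG unfolding is_bigrading_def by blast

lemma bg_fin: "finite (bsupp I)"
  using BG unfolding is_bigrading_def by blast

lemma bdec: "bdec I v (a, b) \<in> I a b" "v = sum (bdec I v) (bsupp I)"
proof -
  have "\<exists>!x. (\<forall>p q. x (p, q) \<in> I p q) \<and> v = sum x (bsupp I)"
    using BG unfolding is_bigrading_def by blast
  from theI'[OF this] show "bdec I v (a, b) \<in> I a b" "v = sum (bdec I v) (bsupp I)"
    unfolding bdec_def by blast+
qed

lemma bdec_mem: "bdec I v pq \<in> I (fst pq) (snd pq)"
  using bdec(1)[of v "fst pq" "snd pq"] by simp

lemma bdec_unique:
  assumes "\<And>a b. x (a, b) \<in> I a b" "v = sum x (bsupp I)"
  shows "bdec I v = x"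
proof -
  have "\<exists>!x. (\<forall>p q. x (p, q) \<in> I p q) \<and> v = sum x (bsupp I)"
    using BG unfolding is_bigrading_def by blast
  then show ?thesis unfolding bdec_def using assms by (intro the1_equality) auto
qed

lemma bdec_out: "pq \<notin> bsupp I \<Longrightarrow> bdec I v pq = 0"
  using bdec_mem[of v pq] unfolding bsupp_def by (cases pq) auto

lemma bdec_add: "bdec I (v + w) pq = bdec I v pq + bdec I w pq"
proof -
  have "bdec I (v + w) = (\<lambda>pq. bdec I v pq + bdec I w pq)"
    by (rule bdec_unique) (auto intro: vec.subspace_add[OF bg_sub] bdec simp: sum.distrib bdec(2)[symmetric])
  then show ?thesis by simp
qed

lemma bdec_scale: "bdec I (c *s v) pq = c *s bdec I v pq"
proof -
  have "bdec I (c *s v) = (\<lambda>pq. c *s bdec I v pq)"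
    by (rule bdec_unique) (auto intro: vec.subspace_scale[OF bg_sub] bdec simp: vec.scale_sum_right[symmetric] bdec(2)[symmetric])
  then show ?thesis by simp
qed

lemma bdec_zero: "bdec I 0 pq = 0"
  using bdec_scale[of 0 0 pq] by simp

lemma bdec_neg: "bdec I (- v) pq = - bdec I v pq"
  using bdec_scale[of "-1" v pq] by simp

lemma bdec_diff: "bdec I (v - w) pq = bdec I v pq - bdec I w pq"
  using bdec_add[of v "- w" pq] bdec_neg[of w pq] by simp

lemma bdec_sum: "bdec I (sum f S) pq = (\<Sum>i\<in>S. bdec I (f i) pq)"
  by (induction S rule: infinite_finite_induct) (auto simp: bdec_zero bdec_add)

lemma bdec_linear: "Vector_Spaces.linear (*s) (*s) (\<lambda>v. bdec I v pq)"
  by (rule cvec_linearI) (auto simp: bdec_add bdec_scale)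

lemma bdec_single:
  assumes "u \<in> I p q"
  shows "bdec I u pq = (if pq = (p, q) then u else 0)"
proof -
  have "bdec I u = (\<lambda>pq. if pq = (p, q) then u else 0)"
  proof (rule bdec_unique)
    show "(if (a, b) = (p, q) then u else 0) \<in> I a b" for a b
      using assms vec.subspace_0[OF bg_sub] by auto
    show "u = (\<Sum>pq\<in>bsupp I. if pq = (p, q) then u else 0)"
    proof (cases "(p, q) \<in> bsupp I")
      case True then show ?thesis using bg_fin by (simp add: sum.delta')
    next
      case False then have "u = 0" using assms unfolding bsupp_def by auto
      then show ?thesis by (simp add: if_distrib cong: if_cong)
    qed
  qed
  then show ?thesis by simp
qed

lemma bdec_single_same: "u \<in> I p q \<Longrightarrow> bdec I u (p, q) = u"
  by (simp add: bdec_single)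

lemma bdec_idem: "bdec I (bdec I v pq) pq' = (if pq' = pq then bdec I v pq else 0)"
  using bdec_single[OF bdec_mem[of v pq]] by simp

lemma bigsum_iff: "v \<in> bigsum I P \<longleftrightarrow> (\<forall>a b. \<not> P a b \<longrightarrow> bdec I v (a, b) = 0)"
proof
  assume "v \<in> bigsum I P"
  then obtain x where x: "\<forall>a b. x (a, b) \<in> I a b" "\<forall>a b. \<not> P a b \<longrightarrow> x (a, b) = 0" "v = sum x (bsupp I)"
    unfolding bigsum_def by blast
  then have "bdec I v = x" by (intro bdec_unique) auto
  then show "\<forall>a b. \<not> P a b \<longrightarrow> bdec I v (a, b) = 0" using x by simp
next
  assume "\<forall>a b. \<not> P a b \<longrightarrow> bdec I v (a, b) = 0"
  then show "v \<in> bigsum I P" unfolding bigsum_def using bdec by blast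
qed

lemma decomp: "v = (\<Sum>pq\<in>bsupp I. bdec I v pq)"
  using bdec(2) .

end

section \<open>The Deligne setting\<close>

lemma rat_cnj: "(z::complex) \<in> \<rat> \<Longrightarrow> cnj z = z"
  by (auto elim!: Rats_cases simp: Reals_cnj_iff[symmetric] of_rat_def)

lemma rational_cnjv: "rational_vec v \<Longrightarrow> cnjv v = v"
  unfolding rational_vec_def by (simp add: vec_eq_iff rat_cnj)

locale dsetting =
  fixes W :: "int \<Rightarrow> (complex^'n) set"
    and Q :: "int \<Rightarrow> complex^'n \<Rightarrow> complex^'n \<Rightarrow> complex"
    and d :: "int \<Rightarrow> nat"
    and Fo :: "int \<Rightarrow> (complex^'n) set"
    and I :: "int \<Rightarrow> int \<Rightarrow> (complex^'n) set"
  assumes W: "rational_inc_filtration W"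
    and Q: "graded_polarization W Q"
    and Fo: "Fo \<in> Mset W Q d"
    and DB: "deligne_bigrading Fo W I"
    and SP: "split_over_R I"
begin

lemma BG: "is_bigrading I"
  using DB unfolding deligne_bigrading_def by blast

lemma W_iff: "v \<in> W k \<longleftrightarrow> (\<forall>a b. k < a + b \<longrightarrow> bdec I v (a, b) = 0)"
proof -
  have "W k = bigsum I (\<lambda>a b. a + b \<le> k)" using DB unfolding deligne_bigrading_def by blast
  then show ?thesis using bigsum_iff[OF BG] by (simp add: not_le)
qed

lemma F_iff: "v \<in> Fo p \<longleftrightarrow> (\<forall>a b. a < p \<longrightarrow> bdec I v (a, b) = 0)"
proof -
  have "Fo p = bigsum I (\<lambda>a b. a \<ge> p)" using DB unfolding deligne_bigrading_def by blast
  then show ?thesis using bigsum_iff[OF BG] by (simp add: not_le)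
qed

lemma W_sub: "vec.subspace (W k)"
  using W unfolding rational_inc_filtration_def rational_subspace_def by blast

lemma Fo_sub: "vec.subspace (Fo p)"
  using Fo unfolding Mset_def dec_filtration_def by blast

lemma I_W: "u \<in> I a b \<Longrightarrow> a + b \<le> k \<Longrightarrow> u \<in> W k"
  unfolding W_iff by (auto simp: bdec_single[OF BG])

lemma I_F: "u \<in> I a b \<Longrightarrow> p \<le> a \<Longrightarrow> u \<in> Fo p"
  unfolding F_iff by (auto simp: bdec_single[OF BG])

lemma W_mono: "j \<le> k \<Longrightarrow> x \<in> W j \<Longrightarrow> x \<in> W k"
  unfolding W_iff by auto

lemma bdec_W: "v \<in> W k \<Longrightarrow> bdec I v pq \<noteq> 0 \<Longrightarrow> fst pq + snd pq \<le> k"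
  unfolding W_iff by (cases pq) (auto simp: not_le[symmetric])

lemma cnj_I: "u \<in> I a b \<Longrightarrow> cnjv u \<in> I b a"
  using SP unfolding split_over_R_def cnjS_def by blast

lemma bsupp_swap: "(a, b) \<in> bsupp I \<longleftrightarrow> (b, a) \<in> bsupp I"
proof -
  have "I b a = cnjv ` I a b" "I a b = cnjv ` I b a"
    using SP unfolding split_over_R_def cnjS_def by auto
  then show ?thesis unfolding bsupp_def by auto
qed

lemma bsupp_swap_img: "prod.swap ` bsupp I = bsupp I"
  using bsupp_swap by (auto simp: image_iff) (metis swap_simp)

lemma bdec_cnj: "bdec I (cnjv v) (a, b) = cnjv (bdec I v (b, a))"
proof -
  have "bdec I (cnjv v) = (\<lambda>pq. cnjv (bdec I v (prod.swap pq)))"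
  proof (rule bdec_unique[OF BG])
    show "cnjv (bdec I v (prod.swap (a, b))) \<in> I a b" for a b
      using cnj_I[OF bdec(1)[OF BG, of v b a]] by simp
    have "(\<Sum>pq\<in>bsupp I. bdec I v (prod.swap pq)) = (\<Sum>pq\<in>prod.swap ` bsupp I. bdec I v pq)"
      by (subst sum.reindex) (auto simp: o_def)
    also have "\<dots> = v" using bsupp_swap_img decomp[OF BG, of v] by simp
    finally show "cnjv v = (\<Sum>pq\<in>bsupp I. cnjv (bdec I v (prod.swap pq)))"
      by (simp add: cnjv_sum[symmetric])
  qed
  then show ?thesis by simp
qed

lemma bdec_cnj': "bdec I (cnjv v) pq = cnjv (bdec I v (prod.swap pq))"
  by (cases pq) (simp add: bdec_cnj)

lemma Qbil: "cbilinear (Q k)"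
  using Q unfolding graded_polarization_def by blast

lemma Q_low: "x \<in> W k \<Longrightarrow> y \<in> W (k - 1) \<Longrightarrow> Q k x y = 0 \<and> Q k y x = 0"
  using Q unfolding graded_polarization_def by blast

lemma Q_conj:
  assumes x: "x \<in> W k" and y: "y \<in> W k"
  shows "Q k (cnjv x) (cnjv y) = cnj (Q k x y)"
proof -
  define R where "R = W k \<inter> {v. rational_vec v}"
  have span: "W k = vec.span R"
    using W unfolding R_def rational_inc_filtration_def rational_subspace_def by blast
  have Rr: "Q k r s \<in> \<rat>" if "r \<in> R" "s \<in> R" for r s
    using Q that unfolding R_def graded_polarization_def by blast
  note B = Qbil[of k]
  have step1: "\<forall>s\<in>R. Q k (cnjv x') (cnjv s) = cnj (Q k x' s)" if "x' \<in> W k" for x'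
  proof -
    have "x' \<in> vec.span R" using that span by simp
    then show ?thesis
    proof (induction rule: vec.span_induct)
      case (step x0)
      show ?case
      proof
        fix s assume s: "s \<in> R"
        have "cnjv x0 = x0" "cnjv s = s" using rational_cnjv step s unfolding R_def by auto
        then show "Q k (cnjv x0) (cnjv s) = cnj (Q k x0 s)" using rat_cnj[OF Rr[OF step s]] by simp
      qed
    next
      case base
      show ?case unfolding vec.subspace_def
        by (auto simp: cbil_0l[OF B] cbil_addl[OF B] cbil_scalel[OF B])
    qed
  qed
  have "y \<in> vec.span R" using y span by simp
  then have "\<forall>x'\<in>W k. Q k (cnjv x') (cnjv y) = cnj (Q k x' y)"
  proof (induction rule: vec.span_induct)
    case step
    then show ?case using step1 by blast
  next
    case base
    show ?case unfolding vec.subspace_def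
      by (auto simp: cbil_0r[OF B] cbil_addr[OF B] cbil_scaler[OF B])
  qed
  then show ?thesis using x by blast
qed

lemma gpmhs: "is_gpmhs W Q Fo"
  using Fo unfolding Mset_def by blast

lemma orth1:
  assumes u: "u \<in> I a b" and w: "w \<in> I a' b'" and k: "a + b = k" "a' + b' = k" and gt: "k < a + a'"
  shows "Q k u w = 0"
proof -
  have z: "0 \<in> W (k - 1)" using vec.subspace_0[OF W_sub] .
  have "u \<in> grF W Fo k a"
    unfolding grF_def setplus_def using I_F[OF u, of a] I_W[OF u, of k] k z by force
  moreover have "w \<in> grF W Fo k (k - a + 1)"
    unfolding grF_def setplus_def using I_F[OF w, of "k - a + 1"] I_W[OF w, of k] k z gt by force
  ultimately show ?thesis using gpmhs unfolding is_gpmhs_def by blast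
qed

lemma orth:
  assumes u: "u \<in> I a b" and w: "w \<in> I a' b'" and k: "a + b = k" "a' + b' = k" and ne: "a + a' \<noteq> k"
  shows "Q k u w = 0"
proof (cases "k < a + a'")
  case True then show ?thesis using orth1[OF u w k] by blast
next
  case False
  then have "k < b + b'" using ne k by linarith
  then have "Q k (cnjv u) (cnjv w) = 0"
    by (intro orth1[OF cnj_I[OF u] cnj_I[OF w]]) (use k in auto)
  moreover have "Q k (cnjv u) (cnjv w) = cnj (Q k u w)"
    using Q_conj I_W[OF u] I_W[OF w] k by auto
  ultimately show ?thesis by simp
qed


lemma scaleR_cvec: "r *\<^sub>R (v::complex^'m) = complex_of_real r *s v"
  unfolding vec_eq_iff by (simp add: scaleR_conv_of_real[where 'a=complex])

lemma cscaleM_mv: "cscaleM c A *v v = c *s (A *v v)"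
  by (simp add: cscaleM_def matrix_vector_mult_def vec_eq_iff sum_distrib_left mult_ac)

lemma Lcoef_neg: "r < 0 \<Longrightarrow> Lcoef r s = - \<i>"
  by (simp add: Lcoef_def)

lemma Lcoef_cnj: "-1 \<le> r + s \<Longrightarrow> r + s \<le> 0 \<Longrightarrow> cnj (Lcoef r s) = Lcoef s r"
  by (auto simp: Lcoef_def)

lemma Lop_apply: "Lop I X *v v = (\<Sum>pq\<in>bsupp I. \<Sum>pq'\<in>bsupp I.
      Lcoef (fst pq' - fst pq) (snd pq' - snd pq) *s bdec I (X *v bdec I v pq) pq')"
proof -
  have lin: "Vector_Spaces.linear (*s) (*s) (\<lambda>v. \<Sum>pq\<in>bsupp I. \<Sum>pq'\<in>bsupp I.
      Lcoef (fst pq' - fst pq) (snd pq' - snd pq) *s bdec I (X *v bdec I v pq) pq')"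
    by (rule cvec_linearI)
      (simp_all add: bdec_add[OF BG] bdec_scale[OF BG] matrix_vector_right_distrib mv_scale
        vec.scale_right_distrib sum.distrib vec.scale_sum_right mult.commute)
  show ?thesis unfolding Lop_def bproj_bdec by (simp add: matrix_works[OF lin])
qed

lemma LC: "bdec I (Lop I X *v v) (a, b) =
   (\<Sum>pq\<in>bsupp I. Lcoef (a - fst pq) (b - snd pq) *s bdec I (X *v bdec I v pq) (a, b))"
proof -
  have "bdec I (Lop I X *v v) (a, b) = (\<Sum>pq\<in>bsupp I. \<Sum>pq'\<in>bsupp I.
      Lcoef (fst pq' - fst pq) (snd pq' - snd pq) *s bdec I (bdec I (X *v bdec I v pq) pq') (a, b))"
    unfolding Lop_apply by (simp add: bdec_sum[OF BG] bdec_scale[OF BG])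
  also have "\<dots> = (\<Sum>pq\<in>bsupp I. Lcoef (a - fst pq) (b - snd pq) *s bdec I (X *v bdec I v pq) (a, b))"
  proof (rule sum.cong[OF refl])
    fix pq assume "pq \<in> bsupp I"
    show "(\<Sum>pq'\<in>bsupp I. Lcoef (fst pq' - fst pq) (snd pq' - snd pq) *s bdec I (bdec I (X *v bdec I v pq) pq') (a, b))
      = Lcoef (a - fst pq) (b - snd pq) *s bdec I (X *v bdec I v pq) (a, b)"
      by (subst sum_single[OF bg_fin[OF BG], where z="(a,b)"])
        (auto simp: bdec_idem[OF BG] bdec_out[OF BG])
  qed
  finally show ?thesis .
qed

lemma LC_single:
  assumes u: "u \<in> I p q"
  shows "bdec I (Lop I X *v u) (a, b) = Lcoef (a - p) (b - q) *s bdec I (X *v u) (a, b)"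
proof -
  have "bdec I (Lop I X *v u) (a, b) =
   (\<Sum>pq\<in>bsupp I. Lcoef (a - fst pq) (b - snd pq) *s bdec I (X *v bdec I u pq) (a, b))"
    by (rule LC)
  also have "\<dots> = Lcoef (a - p) (b - q) *s bdec I (X *v u) (a, b)"
    using u by (subst sum_single[OF bg_fin[OF BG], where z="(p,q)"])
      (auto simp: bdec_single[OF BG u] bdec_zero[OF BG] dest: bdec_out[OF BG, where v="X *v u"]
        simp: bsupp_def)
  finally show ?thesis .
qed

lemma LC_single':
  assumes u: "u \<in> I p q"
  shows "bdec I (Lop I X *v u) ab = Lcoef (fst ab - p) (snd ab - q) *s bdec I (X *v u) ab"
  using LC_single[OF u, of X "fst ab" "snd ab"] by simp

definition "SW = {X. \<forall>k. \<forall>x\<in>W k. X *v x \<in> W k}"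
definition "SH = {X. \<forall>k. \<forall>x\<in>W k. X *v x \<in> W k \<and> cnjv (X *v x) - X *v cnjv x \<in> W (k - 2)}"
definition "SPF = {X. \<forall>p. \<forall>x\<in>Fo p. X *v x \<in> Fo p}"

lemma Lop_SW:
  assumes X: "X \<in> SW"
  shows "Lop I X \<in> SW"
  unfolding SW_def mem_Collect_eq
proof (intro allI ballI)
  fix k v assume v: "v \<in> W k"
  show "Lop I X *v v \<in> W k"
    unfolding W_iff
  proof (intro allI impI)
    fix a b assume ab: "k < a + b"
    show "bdec I (Lop I X *v v) (a, b) = 0"
      unfolding LC
    proof (rule sum.neutral, rule ballI)
      fix pq assume "pq \<in> bsupp I"
      show "Lcoef (a - fst pq) (b - snd pq) *s bdec I (X *v bdec I v pq) (a, b) = 0"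
      proof (cases "bdec I v pq = 0")
        case True then show ?thesis by (simp add: bdec_zero[OF BG])
      next
        case False
        then have le: "fst pq + snd pq \<le> k" using bdec_W v by blast
        have "bdec I v pq \<in> W (fst pq + snd pq)" using I_W[OF bdec_mem[OF BG]] by simp
        then have "X *v bdec I v pq \<in> W (fst pq + snd pq)" using X unfolding SW_def by blast
        then have "bdec I (X *v bdec I v pq) (a, b) = 0" unfolding W_iff using le ab by auto
        then show ?thesis by simp
      qed
    qed
  qed
qed

lemma SH_SW: "SH \<subseteq> SW"
  unfolding SH_def SW_def by blast

lemma Lop_SH:
  assumes X: "X \<in> SH"
  shows "Lop I X \<in> SH"
  unfolding SH_def mem_Collect_eq
proof (intro allI ballI conjI)
  fix k v assume v: "v \<in> W k"
  show "Lop I X *v v \<in> W k" using Lop_SW[of X] X SH_SW v unfolding SW_def by blast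
  show "cnjv (Lop I X *v v) - Lop I X *v cnjv v \<in> W (k - 2)"
    unfolding W_iff
  proof (intro allI impI)
    fix a b assume ab: "k - 2 < a + b"
    have L: "bdec I (cnjv (Lop I X *v v)) (a, b) = (\<Sum>pq\<in>bsupp I.
       cnj (Lcoef (b - fst pq) (a - snd pq)) *s cnjv (bdec I (X *v bdec I v pq) (b, a)))"
      unfolding bdec_cnj LC by (simp add: cnjv_sum)
    have "bdec I (Lop I X *v cnjv v) (a, b) = (\<Sum>pq\<in>bsupp I.
       Lcoef (a - fst pq) (b - snd pq) *s bdec I (X *v cnjv (bdec I v (prod.swap pq))) (a, b))"
      unfolding LC by (simp add: bdec_cnj')
    also have "\<dots> = (\<Sum>pq\<in>prod.swap ` bsupp I.
       Lcoef (a - snd pq) (b - fst pq) *s bdec I (X *v cnjv (bdec I v pq)) (a, b))"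
      by (subst sum.reindex) (auto simp: o_def)
    also have "\<dots> = (\<Sum>pq\<in>bsupp I.
       Lcoef (a - snd pq) (b - fst pq) *s bdec I (X *v cnjv (bdec I v pq)) (a, b))"
      using bsupp_swap_img by simp
    finally have R: "bdec I (Lop I X *v cnjv v) (a, b) = \<dots>" .
    have "bdec I (cnjv (Lop I X *v v)) (a, b) = bdec I (Lop I X *v cnjv v) (a, b)"
      unfolding L R
    proof (rule sum.cong[OF refl])
      fix pq assume "pq \<in> bsupp I"
      define u where "u = bdec I v pq"
      have bu: "bdec I v pq = u" by (simp add: u_def)
      show "cnj (Lcoef (b - fst pq) (a - snd pq)) *s cnjv (bdec I (X *v bdec I v pq) (b, a)) =
          Lcoef (a - snd pq) (b - fst pq) *s bdec I (X *v cnjv (bdec I v pq)) (a, b)"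
      proof (cases "u = 0")
        case True then show ?thesis by (simp add: bu bdec_zero[OF BG])
      next
        case False
        define m where "m = fst pq + snd pq"
        have mk: "m \<le> k" using bdec_W v False unfolding u_def m_def by blast
        have uW: "u \<in> W m" using I_W[OF bdec_mem[OF BG]] unfolding u_def m_def by simp
        have D: "cnjv (X *v u) - X *v cnjv u \<in> W (m - 2)" and XuW: "X *v u \<in> W m"
          using X uW unfolding SH_def by blast+
        have "bdec I (cnjv (X *v u) - X *v cnjv u) (a, b) = 0"
          using D ab mk unfolding W_iff by auto
        then have e: "bdec I (X *v cnjv u) (a, b) = cnjv (bdec I (X *v u) (b, a))"
          by (simp add: bdec_diff[OF BG] bdec_cnj)
        show ?thesis
        proof (cases "bdec I (X *v u) (b, a) = 0")
          case True then show ?thesis unfolding bu e by simp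
        next
          case False
          then have "b + a \<le> m" using bdec_W[OF XuW, of "(b, a)"] by simp
          then have "cnj (Lcoef (b - fst pq) (a - snd pq)) = Lcoef (a - snd pq) (b - fst pq)"
            using ab mk unfolding m_def by (intro Lcoef_cnj) auto
          then show ?thesis unfolding bu e by simp
        qed
      qed
    qed
    then show "bdec I (cnjv (Lop I X *v v) - Lop I X *v cnjv v) (a, b) = 0"
      by (simp add: bdec_diff[OF BG])
  qed
qed


lemma gC_SW: "gClie W Q \<subseteq> SW"
  unfolding gClie_def SW_def by blast

lemma h_SH: "hlie W Q \<subseteq> SH"
  unfolding hlie_def gClie_def SH_def by blast

lemma h_gC: "hlie W Q \<subseteq> gClie W Q"
  unfolding hlie_def by blast

lemma HQ:
  assumes z: "z \<in> W k" and w: "w \<in> I p1 q1" "p1 + q1 = k" and ne: "ab \<noteq> (q1, p1)"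
  shows "Q k (bdec I z ab) w = 0"
proof -
  define e where "e = bdec I z ab"
  have eI: "e \<in> I (fst ab) (snd ab)" unfolding e_def by (rule bdec_mem[OF BG])
  have "Q k e w = 0"
  proof (cases "e = 0")
    case True then show ?thesis by (simp add: cbil_0l[OF Qbil])
  next
    case False
    then have le: "fst ab + snd ab \<le> k" using bdec_W[OF z] unfolding e_def by blast
    have wW: "w \<in> W k" using I_W w by auto
    show ?thesis
    proof (cases "fst ab + snd ab < k")
      case True
      then have "e \<in> W (k - 1)" using I_W[OF eI] by auto
      then show ?thesis using Q_low[OF wW] by blast
    next
      case False
      then have "fst ab + p1 \<noteq> k" using le ne w(2) by (cases ab) auto
      then show ?thesis using orth[OF eI w(1)] le False w(2) by auto
    qed
  qed
  then show ?thesis unfolding e_def .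
qed

lemma HQ':
  assumes z: "z \<in> W k" and u: "u \<in> I p0 q0" "p0 + q0 = k" and ne: "ab \<noteq> (q0, p0)"
  shows "Q k u (bdec I z ab) = 0"
proof -
  define e where "e = bdec I z ab"
  have eI: "e \<in> I (fst ab) (snd ab)" unfolding e_def by (rule bdec_mem[OF BG])
  have "Q k u e = 0"
  proof (cases "e = 0")
    case True then show ?thesis by (simp add: cbil_0r[OF Qbil])
  next
    case False
    then have le: "fst ab + snd ab \<le> k" using bdec_W[OF z] unfolding e_def by blast
    have uW: "u \<in> W k" using I_W u by auto
    show ?thesis
    proof (cases "fst ab + snd ab < k")
      case True
      then have "e \<in> W (k - 1)" using I_W[OF eI] by auto
      then show ?thesis using Q_low[OF uW] by blast
    next
      case False
      then have "p0 + fst ab \<noteq> k" using le ne u(2) by (cases ab) auto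
      then show ?thesis using orth[OF u(1) eI] le False u(2) by auto
    qed
  qed
  then show ?thesis unfolding e_def .
qed

lemma Qsum1:
  assumes z: "z \<in> W k" and w: "w \<in> I p1 q1" "p1 + q1 = k"
  shows "(\<Sum>ab\<in>bsupp I. f ab * Q k (bdec I z ab) w) = f (q1, p1) * Q k (bdec I z (q1, p1)) w"
  by (rule sum_single[OF bg_fin[OF BG]])
    (auto simp: HQ[OF z w] bdec_out[OF BG] cbil_0l[OF Qbil])

lemma Qsum1':
  assumes z: "z \<in> W k" and u: "u \<in> I p0 q0" "p0 + q0 = k"
  shows "(\<Sum>ab\<in>bsupp I. f ab * Q k u (bdec I z ab)) = f (q0, p0) * Q k u (bdec I z (q0, p0))"
  by (rule sum_single[OF bg_fin[OF BG]])
    (auto simp: HQ'[OF z u] bdec_out[OF BG] cbil_0r[OF Qbil])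

lemma Qdec1:
  assumes z: "z \<in> W k" and w: "w \<in> I p1 q1" "p1 + q1 = k"
  shows "Q k z w = Q k (bdec I z (q1, p1)) w"
proof -
  have "Q k z w = Q k (\<Sum>ab\<in>bsupp I. bdec I z ab) w"
    using decomp[OF BG, of z, symmetric] by simp
  also have "\<dots> = (\<Sum>ab\<in>bsupp I. 1 * Q k (bdec I z ab) w)" by (simp add: cbil_suml[OF Qbil])
  also have "\<dots> = Q k (bdec I z (q1, p1)) w" using Qsum1[OF z w, of "\<lambda>_. 1"] by simp
  finally show ?thesis .
qed

lemma Qdec1':
  assumes z: "z \<in> W k" and u: "u \<in> I p0 q0" "p0 + q0 = k"
  shows "Q k u z = Q k u (bdec I z (q0, p0))"
proof -
  have "Q k u z = Q k u (\<Sum>ab\<in>bsupp I. bdec I z ab)"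
    using decomp[OF BG, of z, symmetric] by simp
  also have "\<dots> = (\<Sum>ab\<in>bsupp I. 1 * Q k u (bdec I z ab))" by (simp add: cbil_sumr[OF Qbil])
  also have "\<dots> = Q k u (bdec I z (q0, p0))" using Qsum1'[OF z u, of "\<lambda>_. 1"] by simp
  finally show ?thesis .
qed

lemma LQ_left:
  assumes X: "X \<in> SW" and u: "u \<in> I p0 q0" "p0 + q0 = k" and w: "w \<in> I p1 q1" "p1 + q1 = k"
  shows "Q k (Lop I X *v u) w = Lcoef (q1 - p0) (p1 - q0) * Q k (X *v u) w"
proof -
  have XuW: "X *v u \<in> W k" using X I_W[OF u(1)] u(2) unfolding SW_def by auto
  have "Q k (Lop I X *v u) w = Q k (\<Sum>ab\<in>bsupp I. bdec I (Lop I X *v u) ab) w"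
    using decomp[OF BG, of "Lop I X *v u", symmetric] by simp
  also have "\<dots> = (\<Sum>ab\<in>bsupp I. Lcoef (fst ab - p0) (snd ab - q0) * Q k (bdec I (X *v u) ab) w)"
    by (simp add: cbil_suml[OF Qbil] LC_single'[OF u(1)] cbil_scalel[OF Qbil])
  also have "\<dots> = Lcoef (q1 - p0) (p1 - q0) * Q k (bdec I (X *v u) (q1, p1)) w"
    using Qsum1[OF XuW w, of "\<lambda>ab. Lcoef (fst ab - p0) (snd ab - q0)"] by simp
  also have "\<dots> = Lcoef (q1 - p0) (p1 - q0) * Q k (X *v u) w"
    using Qdec1[OF XuW w] by simp
  finally show ?thesis .
qed

lemma LQ_right:
  assumes X: "X \<in> SW" and u: "u \<in> I p0 q0" "p0 + q0 = k" and w: "w \<in> I p1 q1" "p1 + q1 = k"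
  shows "Q k u (Lop I X *v w) = Lcoef (q0 - p1) (p0 - q1) * Q k u (X *v w)"
proof -
  have XwW: "X *v w \<in> W k" using X I_W[OF w(1)] w(2) unfolding SW_def by auto
  have "Q k u (Lop I X *v w) = Q k u (\<Sum>ab\<in>bsupp I. bdec I (Lop I X *v w) ab)"
    using decomp[OF BG, of "Lop I X *v w", symmetric] by simp
  also have "\<dots> = (\<Sum>ab\<in>bsupp I. Lcoef (fst ab - p1) (snd ab - q1) * Q k u (bdec I (X *v w) ab))"
    by (simp add: cbil_sumr[OF Qbil] LC_single'[OF w(1)] cbil_scaler[OF Qbil])
  also have "\<dots> = Lcoef (q0 - p1) (p0 - q1) * Q k u (bdec I (X *v w) (q0, p0))"
    using Qsum1'[OF XwW u, of "\<lambda>ab. Lcoef (fst ab - p1) (snd ab - q1)"] by simp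
  also have "\<dots> = Lcoef (q0 - p1) (p0 - q1) * Q k u (X *v w)"
    using Qdec1'[OF XwW u] by simp
  finally show ?thesis .
qed

lemma LQ_pair:
  assumes X: "X \<in> gClie W Q" and u: "u \<in> I p0 q0" "p0 + q0 \<le> k" and w: "w \<in> I p1 q1" "p1 + q1 \<le> k"
  shows "Q k (Lop I X *v u) w + Q k u (Lop I X *v w) = 0"
proof -
  have XS: "X \<in> SW" using X gC_SW by blast
  have LS: "Lop I X \<in> SW" using Lop_SW[OF XS] .
  have uW: "u \<in> W k" and wW: "w \<in> W k" using I_W u w by auto
  show ?thesis
  proof (cases "p0 + q0 < k")
    case True
    then have u1: "u \<in> W (k - 1)" using I_W[OF u(1)] by auto
    then have "Lop I X *v u \<in> W (k - 1)" using LS unfolding SW_def by blast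
    moreover have "Lop I X *v w \<in> W k" using LS wW unfolding SW_def by blast
    ultimately show ?thesis using Q_low[OF wW] Q_low[of "Lop I X *v w" k u] u1 by auto
  next
    case False
    note F0 = False
    show ?thesis
    proof (cases "p1 + q1 < k")
      case True
      then have w1: "w \<in> W (k - 1)" using I_W[OF w(1)] by auto
      then have "Lop I X *v w \<in> W (k - 1)" using LS unfolding SW_def by blast
      moreover have "Lop I X *v u \<in> W k" using LS uW unfolding SW_def by blast
      ultimately show ?thesis using Q_low[OF uW] Q_low[of "Lop I X *v u" k w] w1 by auto
    next
      case False
      have k0: "p0 + q0 = k" and k1: "p1 + q1 = k" using F0 False u w by auto
      have "Q k (X *v u) w + Q k u (X *v w) = 0" using X uW wW unfolding gClie_def by blast
      moreover have "Lcoef (q0 - p1) (p0 - q1) = Lcoef (q1 - p0) (p1 - q0)"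
      proof -
        have e1: "q0 - p1 = q1 - p0" and e2: "p0 - q1 = p1 - q0" using k0 k1 by auto
        show ?thesis by (simp only: e1 e2)
      qed
      ultimately show ?thesis
        unfolding LQ_left[OF XS u(1) k0 w(1) k1] LQ_right[OF XS u(1) k0 w(1) k1]
        by (simp add: distrib_left[symmetric])
    qed
  qed
qed

lemma Lop_gC:
  assumes X: "X \<in> gClie W Q"
  shows "Lop I X \<in> gClie W Q"
proof -
  have LS: "Lop I X \<in> SW" using Lop_SW gC_SW X by blast
  have "Q k (Lop I X *v x) y + Q k x (Lop I X *v y) = 0" if x: "x \<in> W k" and y: "y \<in> W k" for k x y
  proof -
    have e1: "Q k (Lop I X *v x) y = (\<Sum>pq\<in>bsupp I. \<Sum>pq'\<in>bsupp I. Q k (Lop I X *v bdec I x pq) (bdec I y pq'))"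
    proof -
      have "Q k (Lop I X *v x) y = Q k (Lop I X *v (\<Sum>pq\<in>bsupp I. bdec I x pq)) (\<Sum>pq'\<in>bsupp I. bdec I y pq')"
        using decomp[OF BG, of x, symmetric] decomp[OF BG, of y, symmetric] by simp
      then show ?thesis by (simp add: mv_sum cbil_suml[OF Qbil] cbil_sumr[OF Qbil]) (rule sum.swap)
    qed
    have e2: "Q k x (Lop I X *v y) = (\<Sum>pq\<in>bsupp I. \<Sum>pq'\<in>bsupp I. Q k (bdec I x pq) (Lop I X *v bdec I y pq'))"
    proof -
      have "Q k x (Lop I X *v y) = Q k (\<Sum>pq\<in>bsupp I. bdec I x pq) (Lop I X *v (\<Sum>pq'\<in>bsupp I. bdec I y pq'))"
        using decomp[OF BG, of x, symmetric] decomp[OF BG, of y, symmetric] by simp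
      then show ?thesis by (simp add: mv_sum cbil_suml[OF Qbil] cbil_sumr[OF Qbil]) (rule sum.swap)
    qed
    have "Q k (Lop I X *v bdec I x pq) (bdec I y pq') + Q k (bdec I x pq) (Lop I X *v bdec I y pq') = 0" for pq pq'
    proof (cases "bdec I x pq = 0 \<or> bdec I y pq' = 0")
      case True then show ?thesis by (auto simp: cbil_0l[OF Qbil] cbil_0r[OF Qbil])
    next
      case False
      then have "fst pq + snd pq \<le> k" "fst pq' + snd pq' \<le> k" using bdec_W x y by blast+
      then show ?thesis using LQ_pair[OF X bdec_mem[OF BG] _ bdec_mem[OF BG]] by blast
    qed
    then show ?thesis unfolding e1 e2 by (simp add: sum.distrib[symmetric])
  qed
  then show ?thesis using LS unfolding gClie_def SW_def by blast
qed

lemma Lop_h: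
  assumes X: "X \<in> hlie W Q"
  shows "Lop I X \<in> hlie W Q"
proof -
  have "Lop I X \<in> gClie W Q" using Lop_gC X h_gC by blast
  moreover have "Lop I X \<in> SH" using Lop_SH X h_SH by blast
  ultimately show ?thesis unfolding hlie_def SH_def by blast
qed

lemma Lop_SPF: "cscaleM \<i> X + Lop I X \<in> SPF"
  unfolding SPF_def mem_Collect_eq
proof (intro allI ballI)
  fix p x assume x: "x \<in> Fo p"
  show "(cscaleM \<i> X + Lop I X) *v x \<in> Fo p"
    unfolding F_iff
  proof (intro allI impI)
    fix a b assume ab: "a < p"
    have e: "bdec I (X *v x) (a, b) = (\<Sum>pq\<in>bsupp I. bdec I (X *v bdec I x pq) (a, b))"
    proof -
      have "bdec I (X *v x) (a, b) = bdec I (X *v (\<Sum>pq\<in>bsupp I. bdec I x pq)) (a, b)"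
        using decomp[OF BG, of x, symmetric] by simp
      then show ?thesis by (simp add: mv_sum bdec_sum[OF BG])
    qed
    have "bdec I ((cscaleM \<i> X + Lop I X) *v x) (a, b) =
      (\<Sum>pq\<in>bsupp I. \<i> *s bdec I (X *v bdec I x pq) (a, b) +
          Lcoef (a - fst pq) (b - snd pq) *s bdec I (X *v bdec I x pq) (a, b))"
      by (simp add: matrix_vector_mult_add_rdistrib cscaleM_mv bdec_add[OF BG] bdec_scale[OF BG] e LC
          vec.scale_sum_right sum.distrib)
    also have "\<dots> = 0"
    proof (rule sum.neutral, rule ballI)
      fix pq assume "pq \<in> bsupp I"
      show "\<i> *s bdec I (X *v bdec I x pq) (a, b) +
          Lcoef (a - fst pq) (b - snd pq) *s bdec I (X *v bdec I x pq) (a, b) = 0"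
      proof (cases "bdec I x pq = 0")
        case True then show ?thesis by (simp add: bdec_zero[OF BG])
      next
        case False
        then have "p \<le> fst pq" using x unfolding F_iff by (cases pq) (auto simp: not_le[symmetric])
        then have "Lcoef (a - fst pq) (b - snd pq) = - \<i>" using ab by (intro Lcoef_neg) auto
        then show ?thesis by (simp add: vec.scale_left_distrib[symmetric])
      qed
    qed
    finally show "bdec I ((cscaleM \<i> X + Lop I X) *v x) (a, b) = 0" .
  qed
qed


lemma mv_scaleR_c: "(r *\<^sub>R (A::complex^'n^'m)) *v v = complex_of_real r *s (A *v v)"
  by (simp add: vec_eq_iff matrix_vector_mult_def sum_distrib_left scaleR_conv_of_real[where 'a=complex] mult_ac)

lemma Lop_add: "Lop I (X + Y) = Lop I X + Lop I Y"
  by (simp add: matrix_eq Lop_apply matrix_vector_mult_add_rdistrib bdec_add[OF BG]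
      vec.scale_right_distrib sum.distrib)

lemma Lop_scaleR: "Lop I (r *\<^sub>R X) = r *\<^sub>R Lop I X"
  by (simp add: matrix_eq Lop_apply mv_scaleR_c bdec_scale[OF BG] vec.scale_sum_right mult.commute)

lemma Lop_linear: "linear (Lop I)"
  by (rule linearI) (simp_all add: Lop_add Lop_scaleR)

lemma W_scaleR: "x \<in> W k \<Longrightarrow> r *\<^sub>R x \<in> W k"
  unfolding scaleR_cvec by (rule vec.subspace_scale[OF W_sub])

lemma F_scaleR: "x \<in> Fo p \<Longrightarrow> r *\<^sub>R x \<in> Fo p"
  unfolding scaleR_cvec by (rule vec.subspace_scale[OF Fo_sub])

lemma W_add: "x \<in> W k \<Longrightarrow> y \<in> W k \<Longrightarrow> x + y \<in> W k"
  by (rule vec.subspace_add[OF W_sub])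

lemma W_diff: "x \<in> W k \<Longrightarrow> y \<in> W k \<Longrightarrow> x - y \<in> W k"
  by (rule vec.subspace_diff[OF W_sub])

lemma W_0: "0 \<in> W k"
  by (rule vec.subspace_0[OF W_sub])

lemma SW_subspace: "subspace SW"
  unfolding subspace_def SW_def
  by (auto simp: matrix_vector_mult_add_rdistrib W_add W_0 mv_scaleR_c vec.subspace_scale[OF W_sub])

lemma SPF_subspace: "subspace SPF"
  unfolding subspace_def SPF_def
  by (auto simp: matrix_vector_mult_add_rdistrib vec.subspace_add[OF Fo_sub] vec.subspace_0[OF Fo_sub]
      mv_scaleR_c vec.subspace_scale[OF Fo_sub])

lemma SH_subspace: "subspace SH"
  unfolding subspace_def SH_def
proof (intro conjI ballI allI, goal_cases)
  case 1 show ?case by (auto simp: W_0)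
next
  case (2 X Y)
  show ?case unfolding mem_Collect_eq
  proof (intro allI ballI conjI)
    fix k x assume x: "x \<in> W k"
    show "(X + Y) *v x \<in> W k" using 2 x by (auto simp: matrix_vector_mult_add_rdistrib W_add)
    have "cnjv ((X + Y) *v x) - (X + Y) *v cnjv x =
      (cnjv (X *v x) - X *v cnjv x) + (cnjv (Y *v x) - Y *v cnjv x)"
      by (simp add: matrix_vector_mult_add_rdistrib algebra_simps)
    then show "cnjv ((X + Y) *v x) - (X + Y) *v cnjv x \<in> W (k - 2)" using 2 x by (auto simp: W_add)
  qed
next
  case (3 c X)
  show ?case unfolding mem_Collect_eq
  proof (intro allI ballI conjI)
    fix k x assume x: "x \<in> W k"
    have "(c *\<^sub>R X) *v x = c *\<^sub>R (X *v x)" by (simp add: mv_scaleR_c scaleR_cvec)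
    then show "(c *\<^sub>R X) *v x \<in> W k" using 3 x W_scaleR by auto
    have "cnjv ((c *\<^sub>R X) *v x) - (c *\<^sub>R X) *v cnjv x = c *\<^sub>R (cnjv (X *v x) - X *v cnjv x)"
      by (simp add: mv_scaleR_c scaleR_cvec[symmetric] algebra_simps)
    then show "cnjv ((c *\<^sub>R X) *v x) - (c *\<^sub>R X) *v cnjv x \<in> W (k - 2)" using 3 x W_scaleR by auto
  qed
qed

lemma SW_mult: "X \<in> SW \<Longrightarrow> Y \<in> SW \<Longrightarrow> X ** Y \<in> SW"
  unfolding SW_def by (simp add: matrix_vector_mul_assoc[symmetric])

lemma SPF_mult: "X \<in> SPF \<Longrightarrow> Y \<in> SPF \<Longrightarrow> X ** Y \<in> SPF"
  unfolding SPF_def by (simp add: matrix_vector_mul_assoc[symmetric])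

lemma SH_mult:
  assumes X: "X \<in> SH" and Y: "Y \<in> SH" shows "X ** Y \<in> SH"
  unfolding SH_def mem_Collect_eq
proof (intro allI ballI conjI)
  fix k x assume x: "x \<in> W k"
  have Yx: "Y *v x \<in> W k" using Y x unfolding SH_def by blast
  then show "(X ** Y) *v x \<in> W k" using X unfolding SH_def by (simp add: matrix_vector_mul_assoc[symmetric])
  have d1: "cnjv (X *v (Y *v x)) - X *v cnjv (Y *v x) \<in> W (k - 2)" using X Yx unfolding SH_def by blast
  have "cnjv (Y *v x) - Y *v cnjv x \<in> W (k - 2)" using Y x unfolding SH_def by blast
  then have d2: "X *v (cnjv (Y *v x) - Y *v cnjv x) \<in> W (k - 2)" using X unfolding SH_def by blast
  have "cnjv ((X ** Y) *v x) - (X ** Y) *v cnjv x =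
     (cnjv (X *v (Y *v x)) - X *v cnjv (Y *v x)) + X *v (cnjv (Y *v x) - Y *v cnjv x)"
    by (simp add: matrix_vector_mul_assoc[symmetric] matrix_vector_mult_diff_distrib)
  then show "cnjv ((X ** Y) *v x) - (X ** Y) *v cnjv x \<in> W (k - 2)" using d1 d2 W_add by simp
qed

lemma one_SW: "mat 1 \<in> SW" and one_SH: "mat 1 \<in> SH" and one_SPF: "mat 1 \<in> SPF"
  unfolding SW_def SH_def SPF_def by (auto simp: W_0)

lemma gC_cscale:
  assumes X: "X \<in> gClie W Q" shows "cscaleM c X \<in> gClie W Q"
  unfolding gClie_def mem_Collect_eq
proof (intro allI conjI ballI)
  fix k x assume x: "x \<in> W k"
  show "cscaleM c X *v x \<in> W k" using X x unfolding cscaleM_mv gClie_def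
    by (auto intro: vec.subspace_scale[OF W_sub])
  fix y assume y: "y \<in> W k"
  have "Q k (X *v x) y + Q k x (X *v y) = 0" using X x y unfolding gClie_def by blast
  then show "Q k (cscaleM c X *v x) y + Q k x (cscaleM c X *v y) = 0"
    unfolding cscaleM_mv by (simp add: cbil_scalel[OF Qbil] cbil_scaler[OF Qbil] distrib_left[symmetric])
qed

end

(* ---- PartB ---- *)
lemma subspace_integral:
  fixes f :: "real \<Rightarrow> 'a::euclidean_space"
  assumes S: "subspace S" and f: "f integrable_on {c..y}" and fS: "\<And>s. s \<in> {c..y} \<Longrightarrow> f s \<in> S"
  shows "integral {c..y} f \<in> S"
proof -
  obtain u z where u: "u \<in> span S" and z: "\<And>w. w \<in> span S \<Longrightarrow> orthogonal z w"
    and e: "integral {c..y} f = u + z"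
    using orthogonal_subspace_decomp_exists[of S "integral {c..y} f"] by blast
  have z0: "z \<bullet> f s = 0" if "s \<in> {c..y}" for s
    using z[of "f s"] fS[OF that] span_superset[of S] unfolding orthogonal_def by blast
  have "z \<bullet> integral {c..y} f = integral {c..y} (\<lambda>s. z \<bullet> f s)"
    using integral_linear[OF f bounded_linear_inner_right[of z]] by (simp add: o_def)
  also have "integral {c..y} (\<lambda>s. z \<bullet> f s) = integral {c..y} (\<lambda>s. 0)"
    by (rule integral_cong) (rule z0)
  also have "\<dots> = 0" by simp
  finally have "z \<bullet> (u + z) = 0" using e by simp
  moreover have "z \<bullet> u = 0" using z[OF u] by (simp add: orthogonal_def)
  ultimately have "z \<bullet> z = 0" by (simp add: inner_add_right)
  then have "z = 0" by simp
  then show ?thesis using e u span_eq_iff[THEN iffD2, OF S] by simp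
qed

lemma deriv_within_extend:
  fixes f :: "real \<Rightarrow> 'a::real_normed_vector"
  assumes D: "is_interval D" "c \<in> D" "\<And>y. y \<in> D \<Longrightarrow> c \<le> y" and d: "d \<in> D" and y: "c \<le> y" "y < d"
    and f: "(f has_vector_derivative f') (at y within {c..d})"
  shows "(f has_vector_derivative f') (at y within D)"
proof -
  have sub: "{c..d} \<subseteq> D"
  proof
    fix x assume "x \<in> {c..d}"
    then show "x \<in> D" using D(1)[unfolded is_interval_1, rule_format, OF D(2) d, of x] by simp
  qed
  have "at y within D = at y within {c..d}"
  proof (rule at_within_nhd[where S="{..<d}"])
    show "y \<in> {..<d}" using y by simp
    show "open {..<d}" by simp
    have "D \<inter> {..<d} = {c..d} \<inter> {..<d}"
    proof
      show "D \<inter> {..<d} \<subseteq> {c..d} \<inter> {..<d}" using D(3) by fastforce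
      show "{c..d} \<inter> {..<d} \<subseteq> D \<inter> {..<d}" using sub by blast
    qed
    then show "D \<inter> {..<d} - {y} = {c..d} \<inter> {..<d} - {y}" by simp
  qed
  then show ?thesis using f by simp
qed


lemma interval_sub:
  fixes D :: "real set"
  assumes "is_interval D" "c \<in> D" "d \<in> D" shows "{c..d} \<subseteq> D"
proof
  fix x assume "x \<in> {c..d}"
  then show "x \<in> D" using assms(1)[unfolded is_interval_1, rule_format, OF assms(2,3), of x] by simp
qed

lemma poly_integral:
  fixes C L c y :: real and n :: nat
  assumes "c \<le> y"
  shows "integral {c..y} (\<lambda>s. C * L ^ Suc (Suc n) * (s - c) ^ Suc n / fact (Suc n))
       = C * (L * (y - c)) ^ Suc (Suc n) / fact (Suc (Suc n))"
proof -
  define G where "G s = C * L ^ Suc (Suc n) * (s - c) ^ Suc (Suc n) / fact (Suc (Suc n))" for s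
  have "((\<lambda>s. C * L ^ Suc (Suc n) * (s - c) ^ Suc n / fact (Suc n)) has_integral G y - G c) {c..y}"
  proof (rule fundamental_theorem_of_calculus[OF assms])
    fix x assume "x \<in> {c..y}"
    have "(G has_real_derivative C * L ^ Suc (Suc n) * (of_nat (Suc (Suc n)) * (x - c) ^ Suc n * 1) / fact (Suc (Suc n))) (at x within {c..y})"
      unfolding G_def by (intro derivative_eq_intros) auto
    moreover have "C * L ^ Suc (Suc n) * (of_nat (Suc (Suc n)) * (x - c) ^ Suc n * 1) / fact (Suc (Suc n))
        = C * L ^ Suc (Suc n) * (x - c) ^ Suc n / fact (Suc n)"
    proof -
      have gen: "a * (k * b * 1) / (k * f) = a * b / f" if "k \<noteq> 0" for a b k f :: real
        using that by (cases "f = 0") (auto simp: field_simps)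
      show ?thesis unfolding fact_Suc[of "Suc n"] by (rule gen) simp
    qed
    ultimately have h: "(G has_real_derivative C * L ^ Suc (Suc n) * (x - c) ^ Suc n / fact (Suc n)) (at x within {c..y})"
      by metis
    then show "(G has_vector_derivative C * L ^ Suc (Suc n) * (x - c) ^ Suc n / fact (Suc n)) (at x within {c..y})"
      by (simp only: has_real_derivative_iff_has_vector_derivative)
  qed
  then have "integral {c..y} (\<lambda>s. C * L ^ Suc (Suc n) * (s - c) ^ Suc n / fact (Suc n)) = G y - G c"
    by (rule integral_unique)
  then show ?thesis by (simp add: G_def power_mult_distrib)
qed

lemma ode_half:
  fixes prod :: "'a::euclidean_space \<Rightarrow> 'a \<Rightarrow> 'a" and B :: "real \<Rightarrow> 'a"
  assumes bb: "bounded_bilinear prod"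
    and D: "is_interval D" "c \<in> D" "\<And>y. y \<in> D \<Longrightarrow> c \<le> y" "\<And>y. y \<in> D \<Longrightarrow> \<exists>d\<in>D. y < d"
    and Bc: "continuous_on D B"
    and S: "subspace S" "u0 \<in> S" "\<And>x y. x \<in> S \<Longrightarrow> y \<in> D \<Longrightarrow> prod x (B y) \<in> S"
  shows "\<exists>u. u c = u0 \<and> (\<forall>y\<in>D. u y \<in> S \<and> (u has_vector_derivative prod (u y) (B y)) (at y within D))"
proof -
  interpret bb: bounded_bilinear prod by (rule bb)
  define T where "T = (\<lambda>f y. u0 + integral {c..y} (\<lambda>s. prod (f s) (B s)))"
  define P where "P n = (T ^^ n) (\<lambda>_. u0)" for n
  have P0: "P 0 = (\<lambda>_. u0)" by (simp add: P_def)
  have PS': "P (Suc n) = (\<lambda>y. u0 + integral {c..y} (\<lambda>s. prod (P n s) (B s)))" for n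
    by (simp add: P_def T_def)
  have PS: "P (Suc n) y = u0 + integral {c..y} (\<lambda>s. prod (P n s) (B s))" for n y
    by (simp add: PS')
  have subD: "{c..d} \<subseteq> D" if "d \<in> D" for d using interval_sub[OF D(1,2) that] .
  have cont: "continuous_on {c..d} (P n)" if d: "d \<in> D" for n d
  proof (induction n)
    case 0 show ?case by (simp add: P0)
  next
    case (Suc n)
    have "continuous_on {c..d} (\<lambda>s. prod (P n s) (B s))"
      by (rule bb.continuous_on[OF Suc continuous_on_subset[OF Bc subD[OF d]]])
    then have "(\<lambda>s. prod (P n s) (B s)) integrable_on {c..d}" by (rule integrable_continuous_real)
    then have "continuous_on {c..d} (\<lambda>y. integral {c..y} (\<lambda>s. prod (P n s) (B s)))"
      by (rule indefinite_integral_continuous_1)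
    then show ?case unfolding PS' by (intro continuous_on_add continuous_on_const)
  qed
  have icont: "continuous_on {c..d} (\<lambda>s. prod (P n s) (B s))" if d: "d \<in> D" for n d
    by (rule bb.continuous_on[OF cont[OF d] continuous_on_subset[OF Bc subD[OF d]]])
  have intble: "(\<lambda>s. prod (P n s) (B s)) integrable_on {c..d}" if d: "d \<in> D" for n d
    by (rule integrable_continuous_real[OF icont[OF d]])
  have PinS: "P n y \<in> S" if "y \<in> D" for n y
    using that
  proof (induction n arbitrary: y)
    case 0 then show ?case using S(2) by (simp add: P0)
  next
    case (Suc n)
    have "integral {c..y} (\<lambda>s. prod (P n s) (B s)) \<in> S"
    proof (rule subspace_integral[OF S(1) intble[OF Suc.prems]])
      fix s assume "s \<in> {c..y}"
      then have sD: "s \<in> D" using subD[OF Suc.prems] by blast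
      show "prod (P n s) (B s) \<in> S" by (rule S(3)[OF Suc.IH[OF sD] sD])
    qed
    then show ?case unfolding PS by (rule subspace_add[OF S(1) S(2)])
  qed
  define U where "U y = u0 + (\<Sum>i. P (Suc i) y - P i y)" for y
  obtain K where K: "K > 0" "\<And>a b. norm (prod a b) \<le> norm a * norm b * K"
    using bb.pos_bounded by blast
  have Bbnd: "\<exists>M>0. \<forall>s\<in>{c..d}. norm (B s) \<le> M" if d: "d \<in> D" for d
  proof -
    have "compact (B ` {c..d})"
      by (rule compact_continuous_image[OF continuous_on_subset[OF Bc subD[OF d]]]) simp
    then have "bounded (B ` {c..d})" by (rule compact_imp_bounded)
    then obtain b where "b > 0" "\<forall>x\<in>B ` {c..d}. norm x \<le> b" unfolding bounded_pos by blast
    then show ?thesis by blast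
  qed
  have ul: "uniform_limit {c..d} P U sequentially" if d: "d \<in> D" for d
  proof -
    obtain M where M: "M > 0" "\<And>s. s \<in> {c..d} \<Longrightarrow> norm (B s) \<le> M" using Bbnd[OF d] by blast
    define L where "L = K * M"
    have L0: "L \<ge> 0" using K M by (simp add: L_def)
    have pt: "norm (prod a (B s)) \<le> norm a * M * K" if "s \<in> {c..d}" for a s
    proof -
      have "norm (prod a (B s)) \<le> norm a * norm (B s) * K" by (rule K(2))
      also have "\<dots> \<le> norm a * M * K" using M(2)[OF that] K(1)
        by (intro mult_right_mono mult_left_mono) auto
      finally show ?thesis .
    qed
    have bnd: "\<forall>y\<in>{c..d}. norm (P (Suc n) y - P n y) \<le> norm u0 * (L * (y - c)) ^ Suc n / fact (Suc n)" for n
    proof (induction n)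
      case 0
      show ?case
      proof
        fix y assume y: "y \<in> {c..d}"
        have yD: "y \<in> D" using subD[OF d] y by blast
        have e: "P (Suc 0) y - P 0 y = integral {c..y} (\<lambda>s. prod u0 (B s))" by (simp add: PS P0)
        have "norm (integral {c..y} (\<lambda>s. prod u0 (B s))) \<le> integral {c..y} (\<lambda>s. norm u0 * M * K)"
        proof (rule integral_norm_bound_integral)
          show "(\<lambda>s. prod u0 (B s)) integrable_on {c..y}" using intble[OF yD, of 0] by (simp add: P0)
          show "(\<lambda>s. norm u0 * M * K) integrable_on {c..y}"
            by (intro integrable_continuous_real continuous_intros)
          fix s assume s: "s \<in> {c..y}"
          then show "norm (prod u0 (B s)) \<le> norm u0 * M * K" using pt[of s u0] y by auto
        qed
        also have "\<dots> = norm u0 * (L * (y - c)) ^ Suc 0 / fact (Suc 0)"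
          using y by (simp add: content_real L_def algebra_simps)
        finally show "norm (P (Suc 0) y - P 0 y) \<le> norm u0 * (L * (y - c)) ^ Suc 0 / fact (Suc 0)"
          unfolding e .
      qed
    next
      case (Suc n)
      show ?case
      proof
        fix y assume y: "y \<in> {c..d}"
        have yD: "y \<in> D" using subD[OF d] y by blast
        have "P (Suc (Suc n)) y - P (Suc n) y = integral {c..y} (\<lambda>s. prod (P (Suc n) s) (B s)) - integral {c..y} (\<lambda>s. prod (P n s) (B s))"
          unfolding PS[of "Suc n" y] PS[of n y] by simp
        also have "\<dots> = integral {c..y} (\<lambda>s. prod (P (Suc n) s) (B s) - prod (P n s) (B s))"
          by (rule integral_diff[symmetric]) (rule intble[OF yD])+
        also have "\<dots> = integral {c..y} (\<lambda>s. prod (P (Suc n) s - P n s) (B s))"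
          by (simp add: bb.diff_left)
        finally have e: "P (Suc (Suc n)) y - P (Suc n) y = integral {c..y} (\<lambda>s. prod (P (Suc n) s - P n s) (B s))" .
        have "norm (integral {c..y} (\<lambda>s. prod (P (Suc n) s - P n s) (B s)))
            \<le> integral {c..y} (\<lambda>s. norm u0 * L ^ Suc (Suc n) * (s - c) ^ Suc n / fact (Suc n))"
        proof (rule integral_norm_bound_integral)
          show "(\<lambda>s. prod (P (Suc n) s - P n s) (B s)) integrable_on {c..y}"
            using integrable_diff[OF intble[OF yD, of "Suc n"] intble[OF yD, of n]] by (simp add: bb.diff_left)
          show "(\<lambda>s. norm u0 * L ^ Suc (Suc n) * (s - c) ^ Suc n / fact (Suc n)) integrable_on {c..y}"
            by (intro integrable_continuous_real continuous_intros) simp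
          fix s assume s: "s \<in> {c..y}"
          then have sd: "s \<in> {c..d}" using y by auto
          have "norm (prod (P (Suc n) s - P n s) (B s)) \<le> norm (P (Suc n) s - P n s) * M * K"
            by (rule pt[OF sd])
          also have "\<dots> \<le> (norm u0 * (L * (s - c)) ^ Suc n / fact (Suc n)) * M * K"
            using Suc.IH sd K(1) M(1) by (intro mult_right_mono) auto
          also have "\<dots> = norm u0 * L ^ Suc (Suc n) * (s - c) ^ Suc n / fact (Suc n)"
            by (simp add: L_def power_mult_distrib)
          finally show "norm (prod (P (Suc n) s - P n s) (B s)) \<le> norm u0 * L ^ Suc (Suc n) * (s - c) ^ Suc n / fact (Suc n)" .
        qed
        also have "\<dots> = norm u0 * (L * (y - c)) ^ Suc (Suc n) / fact (Suc (Suc n))"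
          using y by (intro poly_integral) auto
        finally show "norm (P (Suc (Suc n)) y - P (Suc n) y) \<le> norm u0 * (L * (y - c)) ^ Suc (Suc n) / fact (Suc (Suc n))"
          unfolding e .
      qed
    qed
    define Mn where "Mn n = norm u0 * (L * (d - c)) ^ Suc n / fact (Suc n)" for n
    have Mb: "norm (P (Suc n) y - P n y) \<le> Mn n" if y: "y \<in> {c..d}" for n y
    proof -
      have "(L * (y - c)) ^ Suc n \<le> (L * (d - c)) ^ Suc n"
        using y L0 by (intro power_mono mult_left_mono) auto
      then have "norm u0 * (L * (y - c)) ^ Suc n / fact (Suc n) \<le> Mn n"
        unfolding Mn_def by (intro divide_right_mono mult_left_mono) auto
      moreover have "norm (P (Suc n) y - P n y) \<le> norm u0 * (L * (y - c)) ^ Suc n / fact (Suc n)"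
        using bnd[of n] y by blast
      ultimately show ?thesis by linarith
    qed
    have sM: "summable Mn"
    proof -
      have "summable (\<lambda>n. (L * (d - c)) ^ n / fact n)"
        using summable_exp[of "L * (d - c)"] by (simp add: divide_inverse mult.commute)
      then have "summable (\<lambda>n. (L * (d - c)) ^ Suc n / fact (Suc n))"
        by (subst summable_Suc_iff)
      from summable_mult[OF this, of "norm u0"] show ?thesis
        unfolding Mn_def by (simp only: times_divide_eq_right)
    qed
    have Wm: "uniform_limit {c..d} (\<lambda>n y. \<Sum>i<n. P (Suc i) y - P i y) (\<lambda>y. \<Sum>i. P (Suc i) y - P i y) sequentially"
      by (rule Weierstrass_m_test[where f="\<lambda>i y. P (Suc i) y - P i y", OF Mb sM])
    have tel: "(\<Sum>i<n. P (Suc i) y - P i y) = P n y - u0" for n y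
      using sum_lessThan_telescope[of "\<lambda>i. P i y" n] by (simp add: P0)
    show ?thesis
    proof (rule uniform_limitI)
      fix e :: real assume e: "e > 0"
      show "\<forall>\<^sub>F n in sequentially. \<forall>y\<in>{c..d}. dist (P n y) (U y) < e"
        using uniform_limitD[OF Wm e]
      proof (rule eventually_mono)
        fix n assume "\<forall>y\<in>{c..d}. dist (\<Sum>i<n. P (Suc i) y - P i y) (\<Sum>i. P (Suc i) y - P i y) < e"
        moreover have "dist (P n y) (U y) = dist (\<Sum>i<n. P (Suc i) y - P i y) (\<Sum>i. P (Suc i) y - P i y)" for y
          unfolding tel U_def dist_norm by (simp add: algebra_simps)
        ultimately show "\<forall>y\<in>{c..d}. dist (P n y) (U y) < e" by simp
      qed
    qed
  qed
  have Ucont: "continuous_on {c..d} U" if d: "d \<in> D" for d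
    by (rule uniform_limit_theorem[OF always_eventually[OF allI[OF cont[OF d]]] ul[OF d]]) simp
  have Ueq: "U y = u0 + integral {c..y} (\<lambda>s. prod (U s) (B s))" if d: "d \<in> D" and y: "y \<in> {c..d}" for d y
  proof -
    have yD: "y \<in> D" using subD[OF d] y by blast
    have ul': "uniform_limit {c..y} P U sequentially"
      by (rule uniform_limit_on_subset[OF ul[OF d]]) (use y in auto)
    obtain M where M: "M > 0" "\<And>s. s \<in> {c..y} \<Longrightarrow> norm (B s) \<le> M" using Bbnd[OF yD] by blast
    have ul2: "uniform_limit {c..y} (\<lambda>n s. prod (P n s) (B s)) (\<lambda>s. prod (U s) (B s)) sequentially"
    proof (rule uniform_limitI)
      fix e :: real assume e: "e > 0"
      then have e': "e / (M * K) > 0" using M K by simp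
      show "\<forall>\<^sub>F n in sequentially. \<forall>s\<in>{c..y}. dist (prod (P n s) (B s)) (prod (U s) (B s)) < e"
        using uniform_limitD[OF ul' e']
      proof (rule eventually_mono)
        fix n assume h: "\<forall>s\<in>{c..y}. dist (P n s) (U s) < e / (M * K)"
        show "\<forall>s\<in>{c..y}. dist (prod (P n s) (B s)) (prod (U s) (B s)) < e"
        proof
          fix s assume s: "s \<in> {c..y}"
          have "dist (prod (P n s) (B s)) (prod (U s) (B s)) = norm (prod (P n s - U s) (B s))"
            by (simp add: dist_norm bb.diff_left)
          also have "\<dots> \<le> norm (P n s - U s) * norm (B s) * K" by (rule K(2))
          also have "\<dots> \<le> norm (P n s - U s) * M * K" using M(2)[OF s] K(1)
            by (intro mult_right_mono mult_left_mono) auto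
          also have "\<dots> < e / (M * K) * M * K"
            using h s M(1) K(1) by (intro mult_strict_right_mono) (auto simp: dist_norm)
          also have "\<dots> = e" using M(1) K(1) by simp
          finally show "dist (prod (P n s) (B s)) (prod (U s) (B s)) < e" .
        qed
      qed
    qed
    obtain Iv J where I: "\<And>n. ((\<lambda>s. prod (P n s) (B s)) has_integral Iv n) {c..y}"
      and J: "((\<lambda>s. prod (U s) (B s)) has_integral J) {c..y}" and lim: "Iv \<longlonglongrightarrow> J"
      by (rule uniform_limit_integral[OF ul2 icont[OF yD]]) (simp | blast)+
    have "(\<lambda>n. P (Suc n) y) \<longlonglongrightarrow> u0 + J"
    proof -
      have "P (Suc n) y = u0 + Iv n" for n unfolding PS using integral_unique[OF I] by simp
      then show ?thesis using tendsto_add[OF tendsto_const lim] by simp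
    qed
    moreover have "(\<lambda>n. P (Suc n) y) \<longlonglongrightarrow> U y"
      by (rule LIMSEQ_Suc[OF tendsto_uniform_limitI[OF ul']]) (use y in auto)
    ultimately have "U y = u0 + J" using LIMSEQ_unique by blast
    then show ?thesis using integral_unique[OF J] by simp
  qed
  have Uder: "(U has_vector_derivative prod (U y) (B y)) (at y within {c..d})" if d: "d \<in> D" and y: "y \<in> {c..d}" for d y
  proof -
    have c1: "continuous_on {c..d} (\<lambda>s. prod (U s) (B s))"
      by (rule bb.continuous_on[OF Ucont[OF d] continuous_on_subset[OF Bc subD[OF d]]])
    have "((\<lambda>y. u0 + integral {c..y} (\<lambda>s. prod (U s) (B s))) has_vector_derivative 0 + prod (U y) (B y)) (at y within {c..d})"
      by (intro has_vector_derivative_add has_vector_derivative_const integral_has_vector_derivative[OF c1 y])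
    note der = this
    have eq: "\<And>x. x \<in> {c..d} \<Longrightarrow> U x = u0 + integral {c..x} (\<lambda>s. prod (U s) (B s))"
      by (rule Ueq[OF d])
    have "(U has_vector_derivative 0 + prod (U y) (B y)) (at y within {c..d})"
      by (rule has_vector_derivative_transform[where f="\<lambda>x. u0 + integral {c..x} (\<lambda>s. prod (U s) (B s))"
          and g = U and S = "{c..d}", OF y eq der])
    then show ?thesis by simp
  qed
  have Uc: "U c = u0"
  proof -
    have "P (Suc i) c - P i c = 0" for i
      by (cases i) (simp_all add: PS P0)
    then show ?thesis unfolding U_def by simp
  qed
  have "U y \<in> S \<and> (U has_vector_derivative prod (U y) (B y)) (at y within D)" if y: "y \<in> D" for y
  proof
    obtain d where d: "d \<in> D" "y < d" using D(4)[OF y] by blast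
    have yi: "y \<in> {c..d}" using D(3)[OF y] d by simp
    show "(U has_vector_derivative prod (U y) (B y)) (at y within D)"
      by (rule deriv_within_extend[OF D(1,2,3) d(1) D(3)[OF y] d(2) Uder[OF d(1) yi]])
    have "(\<lambda>n. P n y) \<longlonglongrightarrow> U y" by (rule tendsto_uniform_limitI[OF ul[OF d(1)] yi])
    then show "U y \<in> S" by (rule closed_sequentially[OF closed_subspace[OF S(1)] PinS[OF y]])
  qed
  then show ?thesis using Uc by blast
qed


lemma hvd_union:
  assumes "(f has_vector_derivative f') (at x within s)" "(f has_vector_derivative f') (at x within t)"
  shows "(f has_vector_derivative f') (at x within (s \<union> t))"
  using assms unfolding has_vector_derivative_def has_derivative_within Lim_within_Un by blast

lemma ode_global:
  fixes prod :: "'a::euclidean_space \<Rightarrow> 'a \<Rightarrow> 'a" and B :: "real \<Rightarrow> 'a"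
  assumes bb: "bounded_bilinear prod" and y0: "a < y0"
    and Bc: "continuous_on {a<..} B"
    and S: "subspace S" "u0 \<in> S" "\<And>x y. x \<in> S \<Longrightarrow> a < y \<Longrightarrow> prod x (B y) \<in> S"
  shows "\<exists>u. u y0 = u0 \<and> (\<forall>y>a. u y \<in> S \<and> (u has_vector_derivative prod (u y) (B y)) (at y))"
proof -
  interpret bb: bounded_bilinear prod by (rule bb)
  obtain uR where uR0: "uR y0 = u0"
    and uR: "\<And>y. y \<in> {y0..} \<Longrightarrow> uR y \<in> S \<and> (uR has_vector_derivative prod (uR y) (B y)) (at y within {y0..})"
  proof -
    have "\<exists>u. u y0 = u0 \<and> (\<forall>y\<in>{y0..}. u y \<in> S \<and> (u has_vector_derivative prod (u y) (B y)) (at y within {y0..}))"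
    proof (rule ode_half[OF bb])
      show "is_interval {y0..}" unfolding is_interval_1 by auto
      show "y0 \<in> {y0..}" by simp
      show "\<And>y. y \<in> {y0..} \<Longrightarrow> y0 \<le> y" by simp
      show "\<And>y. y \<in> {y0..} \<Longrightarrow> \<exists>d\<in>{y0..}. y < d" by (rule_tac x="y + 1" in bexI) auto
      show "continuous_on {y0..} B" by (rule continuous_on_subset[OF Bc]) (use y0 in auto)
      show "subspace S" "u0 \<in> S" by (fact S)+
      show "\<And>x y. x \<in> S \<Longrightarrow> y \<in> {y0..} \<Longrightarrow> prod x (B y) \<in> S" using S(3) y0 by auto
    qed
    then show ?thesis using that by blast
  qed
  define e where "e = y0 - a"
  have e0: "e > 0" using y0 by (simp add: e_def)
  obtain v where v0: "v 0 = u0"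
    and v: "\<And>t. t \<in> {0..<e} \<Longrightarrow> v t \<in> S \<and> (v has_vector_derivative prod (v t) (- B (y0 - t))) (at t within {0..<e})"
  proof -
    have "\<exists>u. u 0 = u0 \<and> (\<forall>t\<in>{0..<e}. u t \<in> S \<and> (u has_vector_derivative prod (u t) (- B (y0 - t))) (at t within {0..<e}))"
    proof (rule ode_half[OF bb])
      show "is_interval {0..<e}" unfolding is_interval_1 by auto
      show "0 \<in> {0..<e}" using e0 by simp
      show "\<And>y. y \<in> {0..<e} \<Longrightarrow> 0 \<le> y" by simp
      show "\<And>y. y \<in> {0..<e} \<Longrightarrow> \<exists>d\<in>{0..<e}. y < d" by (rule_tac x="(y + e) / 2" in bexI) auto
      have "continuous_on {0..<e} (\<lambda>t. B (y0 - t))"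
        by (rule continuous_on_compose2[OF Bc]) (auto intro!: continuous_intros simp: e_def)
      then show "continuous_on {0..<e} (\<lambda>t. - B (y0 - t))" by (rule continuous_on_minus)
      show "subspace S" "u0 \<in> S" by (fact S)+
      show "\<And>x y. x \<in> S \<Longrightarrow> y \<in> {0..<e} \<Longrightarrow> prod x (- B (y0 - y)) \<in> S"
        using S(3) subspace_neg[OF S(1)] unfolding e_def by (auto simp: bb.minus_right)
    qed
    then show ?thesis using that by blast
  qed
  define u where "u y = (if y0 \<le> y then uR y else v (y0 - y))" for y
  have "u y \<in> S \<and> (u has_vector_derivative prod (u y) (B y)) (at y)" if y: "a < y" for y
  proof (cases "y0 < y")
    case True
    have "at y within {y0..} = at y within UNIV"
      by (rule at_within_nhd[where S="{y0<..}"]) (use True in auto)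
    then have d: "(uR has_vector_derivative prod (uR y) (B y)) (at y)" using uR[of y] True by simp
    have "(u has_vector_derivative prod (uR y) (B y)) (at y)"
      by (rule has_vector_derivative_transform_within_open[OF d, of "{y0<..}"]) (use True in \<open>auto simp: u_def\<close>)
    then show ?thesis using uR[of y] True by (simp add: u_def)
  next
    case False
    note F = False
    show ?thesis
    proof (cases "y < y0")
      case True
      have t: "y0 - y \<in> {0..<e}" using True y by (simp add: e_def)
      have "at (y0 - y) within {0..<e} = at (y0 - y) within UNIV"
        by (rule at_within_nhd[where S="{0<..<e}"]) (use t True in auto)
      then have dv: "(v has_vector_derivative prod (v (y0 - y)) (- B (y0 - (y0 - y)))) (at (y0 - y))"
        using v[OF t] by simp
      have df: "((\<lambda>y. y0 - y) has_vector_derivative -1) (at y)"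
        by (auto intro!: derivative_eq_intros)
      have "((v \<circ> (\<lambda>y. y0 - y)) has_vector_derivative (-1) *\<^sub>R prod (v (y0 - y)) (- B (y0 - (y0 - y)))) (at y)"
        by (rule vector_diff_chain_at[OF df dv])
      then have d: "((\<lambda>y. v (y0 - y)) has_vector_derivative prod (v (y0 - y)) (B y)) (at y)"
        by (simp add: o_def bb.minus_right)
      have "(u has_vector_derivative prod (v (y0 - y)) (B y)) (at y)"
        by (rule has_vector_derivative_transform_within_open[OF d, of "{..<y0}"]) (use True in \<open>auto simp: u_def\<close>)
      then show ?thesis using v[OF t] True by (simp add: u_def)
    next
      case False
      then have yy: "y = y0" using F by simp
      have uy0: "u y0 = u0" using uR0 by (simp add: u_def)
      have dR: "(u has_vector_derivative prod u0 (B y0)) (at y0 within {y0..})"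
        by (rule has_vector_derivative_transform[of y0 "{y0..}" u uR]) (use uR[of y0] uR0 in \<open>auto simp: u_def\<close>)
      have df: "((\<lambda>y. y0 - y) has_vector_derivative -1) (at y0 within {a<..y0})"
        by (auto intro!: derivative_eq_intros)
      have dv0: "(v has_vector_derivative prod u0 (- B y0)) (at 0 within {0..<e})"
        using v[of 0] e0 v0 by simp
      have "(v has_vector_derivative prod u0 (- B y0)) (at ((\<lambda>y. y0 - y) y0) within (\<lambda>y. y0 - y) ` {a<..y0})"
        by (rule has_vector_derivative_within_subset[OF _ ]) (use dv0 in \<open>auto simp: e_def\<close>)
      from vector_diff_chain_within[OF df this]
      have "((\<lambda>y. v (y0 - y)) has_vector_derivative prod u0 (B y0)) (at y0 within {a<..y0})"
        by (simp add: o_def bb.minus_right)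
      then have dL: "(u has_vector_derivative prod u0 (B y0)) (at y0 within {a<..y0})"
        by (rule has_vector_derivative_transform[rotated 2]) (use y0 v0 uR0 in \<open>auto simp: u_def\<close>)
      have "(u has_vector_derivative prod u0 (B y0)) (at y0 within ({a<..y0} \<union> {y0..}))"
        by (rule hvd_union[OF dL dR])
      moreover have "{a<..y0} \<union> {y0..} = {a<..}" using y0 by auto
      moreover have "at y0 within {a<..} = at y0" using y0 by (intro at_within_open) auto
      ultimately have "(u has_vector_derivative prod u0 (B y0)) (at y0)" by simp
      then show ?thesis using yy uy0 S(2) by simp
    qed
  qed
  moreover have "u y0 = u0" using uR0 by (simp add: u_def)
  ultimately show ?thesis by blast
qed

(* ---- PartC ---- *)
section \<open>matrix algebra\<close>

lemma mm_add_left: "((A::complex^'n^'m) + B) ** C = A ** C + B ** C"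
  by (simp add: vec_eq_iff matrix_matrix_mult_def sum.distrib distrib_right)

lemma mm_add_right: "(A::complex^'n^'m) ** (B + C) = A ** B + A ** C"
  by (rule matrix_add_ldistrib)

lemma mm_scaleR_left: "(r *\<^sub>R (A::complex^'n^'m)) ** B = r *\<^sub>R (A ** B)"
  by (simp add: scalar_matrix_assoc)

lemma mm_scaleR_right: "(A::complex^'n^'m) ** (r *\<^sub>R B) = r *\<^sub>R (A ** B)"
  by (simp add: matrix_scalar_ac scalar_matrix_assoc)

lemma bb_mm: "bounded_bilinear (\<lambda>(A::complex^'n^'m) (B::complex^'k^'n). A ** B)"
proof -
  have "bilinear (\<lambda>(A::complex^'n^'m) (B::complex^'k^'n). A ** B)"
    unfolding bilinear_def
    by (auto intro!: linearI simp: mm_add_left mm_add_right mm_scaleR_left mm_scaleR_right)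
  then show ?thesis by (simp add: bilinear_conv_bounded_bilinear)
qed

lemma bb_mm_flip: "bounded_bilinear (\<lambda>(A::complex^'n^'n) (B::complex^'n^'n). B ** A)"
proof -
  interpret b: bounded_bilinear "\<lambda>(A::complex^'n^'n) (B::complex^'n^'n). A ** B" by (rule bb_mm)
  show ?thesis by (rule b.flip)
qed

lemma bb_mv: "bounded_bilinear (\<lambda>(A::complex^'n^'m) (v::complex^'n). A *v v)"
proof -
  have "bilinear (\<lambda>(A::complex^'n^'m) (v::complex^'n). A *v v)"
    unfolding bilinear_def
    by (auto intro!: linearI simp: matrix_vector_mult_add_rdistrib matrix_vector_right_distrib
        vec_eq_iff matrix_vector_mult_def sum_distrib_left scaleR_conv_of_real[where 'a=complex] mult_ac
        distrib_left sum.distrib)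
  then show ?thesis by (simp add: bilinear_conv_bounded_bilinear)
qed

lemma mm_minus_left: "(- (A::complex^'n^'m)) ** B = - (A ** B)"
  by (simp add: vec_eq_iff matrix_matrix_mult_def sum_negf)

lemma mm_minus_right: "(A::complex^'n^'m) ** (- B) = - (A ** B)"
  by (simp add: vec_eq_iff matrix_matrix_mult_def sum_negf)

lemma mm_diff_left: "((A::complex^'n^'m) - B) ** C = A ** C - B ** C"
  by (simp add: vec_eq_iff matrix_matrix_mult_def sum_subtractf left_diff_distrib)

lemma mm_diff_right: "(A::complex^'n^'m) ** (B - C) = A ** B - A ** C"
  by (simp add: vec_eq_iff matrix_matrix_mult_def sum_subtractf right_diff_distrib)

section \<open>vector derivative of vectors\<close>

lemma hvd_vec:
  fixes f :: "real \<Rightarrow> 'a::real_normed_vector^'n"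
  assumes "\<And>i. ((\<lambda>t. f t $ i) has_vector_derivative f' $ i) (at x within s)"
  shows "(f has_vector_derivative f') (at x within s)"
proof -
  have h: "((\<lambda>y. (1 / norm (y - x)) *\<^sub>R (f y $ i - (f x $ i + (y - x) *\<^sub>R f' $ i))) \<longlongrightarrow> 0) (at x within s)" for i
    using assms[of i] unfolding has_vector_derivative_def has_derivative_within by blast
  have "((\<lambda>y. \<chi> i. (1 / norm (y - x)) *\<^sub>R (f y $ i - (f x $ i + (y - x) *\<^sub>R f' $ i))) \<longlongrightarrow> (\<chi> i. 0)) (at x within s)"
    by (rule tendsto_vec_lambda[OF h])
  moreover have "(\<lambda>y. \<chi> i. (1 / norm (y - x)) *\<^sub>R (f y $ i - (f x $ i + (y - x) *\<^sub>R f' $ i)))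
      = (\<lambda>y. (1 / norm (y - x)) *\<^sub>R (f y - (f x + (y - x) *\<^sub>R f')))"
    by (simp add: vec_eq_iff fun_eq_iff)
  moreover have "(\<chi> i. 0) = (0 :: 'a^'n)" by (simp add: vec_eq_iff)
  ultimately show ?thesis
    unfolding has_vector_derivative_def has_derivative_within
    by (auto intro: bounded_linear_scaleR_left)
qed

section \<open>matrix powers and exponential series\<close>

lemma matpow_0[simp]: "matpow A 0 = mat 1"
  by (simp add: matpow_def)

lemma matpow_Suc: "matpow A (Suc n) = A ** matpow A n"
  by (simp add: matpow_def)

lemma matpow_Suc': "matpow A (Suc n) = matpow A n ** A"
proof (induction n)
  case 0 then show ?case by (simp add: matpow_Suc)
next
  case (Suc n)
  have "matpow A (Suc (Suc n)) = A ** (matpow A n ** A)" using Suc by (simp add: matpow_Suc)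
  also have "\<dots> = matpow A (Suc n) ** A" by (simp add: matpow_Suc matrix_mul_assoc)
  finally show ?case .
qed

lemma cscaleM_mm: "cscaleM c A ** cscaleM d B = cscaleM (c * d) (A ** B)"
  by (simp add: cscaleM_def vec_eq_iff matrix_matrix_mult_def sum_distrib_left mult_ac)

lemma matpow_cscale: "matpow (cscaleM c A) n = cscaleM (c ^ n) (matpow A n)"
proof (induction n)
  case 0 then show ?case by (simp add: cscaleM_def mat_def vec_eq_iff)
next
  case (Suc n) then show ?case by (simp add: matpow_Suc cscaleM_mm)
qed

definition mc :: "complex^'n^'n \<Rightarrow> 'n \<Rightarrow> 'n \<Rightarrow> nat \<Rightarrow> complex" where
  "mc X i j n = matpow X n $ i $ j / of_nat (fact n)"

definition ES :: "complex^'n^'n \<Rightarrow> complex \<Rightarrow> complex^'n^'n" where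
  "ES X z = (\<chi> i j. \<Sum>n. mc X i j n * z ^ n)"

lemma mexp_ES: "mexp (cscaleM (\<i> * complex_of_real y) N) = ES (cscaleM \<i> N) (complex_of_real y)"
  unfolding mexp_def ES_def mc_def matpow_cscale
  by (simp add: cscaleM_def power_mult_distrib mult_ac)

lemma matpow_bound:
  fixes X :: "complex^'n^'n"
  defines "\<rho> \<equiv> 1 + (\<Sum>i\<in>UNIV. \<Sum>j\<in>UNIV. norm (X $ i $ j))"
  shows "norm (matpow X n $ i $ j) \<le> \<rho> ^ n"
proof (induction n arbitrary: i j)
  case 0 then show ?case by (simp add: mat_def)
next
  case (Suc n)
  have row: "(\<Sum>l\<in>UNIV. norm (X $ i $ l)) \<le> \<rho>"
  proof -
    have "(\<Sum>l\<in>UNIV. norm (X $ i $ l)) \<le> (\<Sum>i\<in>UNIV. \<Sum>j\<in>UNIV. norm (X $ i $ j))"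
      by (rule member_le_sum[of i UNIV "\<lambda>i. \<Sum>j\<in>UNIV. norm (X $ i $ j)"]) (auto intro: sum_nonneg)
    then show ?thesis unfolding \<rho>_def by simp
  qed
  have rho0: "0 \<le> \<rho>" unfolding \<rho>_def by (simp add: sum_nonneg add_nonneg_nonneg)
  have "norm (matpow X (Suc n) $ i $ j) = norm (\<Sum>l\<in>UNIV. X $ i $ l * matpow X n $ l $ j)"
    by (simp add: matpow_Suc matrix_matrix_mult_def)
  also have "\<dots> \<le> (\<Sum>l\<in>UNIV. norm (X $ i $ l) * \<rho> ^ n)"
    by (rule order_trans[OF norm_sum sum_mono]) (auto simp: norm_mult intro: mult_left_mono Suc.IH)
  also have "\<dots> \<le> \<rho> * \<rho> ^ n"
    using row rho0 by (simp add: sum_distrib_right[symmetric] mult_right_mono zero_le_power)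
  finally show ?case by simp
qed

lemma mc_summable: "summable (\<lambda>n. mc X i j n * z ^ n)"
proof -
  define \<rho> where "\<rho> = 1 + (\<Sum>i\<in>UNIV. \<Sum>j\<in>UNIV. norm (X $ i $ j))"
  have sg: "summable (\<lambda>n. inverse (fact n) * (\<rho> * norm z) ^ n)" by (rule summable_exp)
  have bnd: "norm (mc X i j n * z ^ n) \<le> inverse (fact n) * (\<rho> * norm z) ^ n" for n
  proof -
    have "norm (mc X i j n * z ^ n) = norm (matpow X n $ i $ j) * norm z ^ n / fact n"
      by (simp add: mc_def norm_mult norm_divide norm_power)
    also have "\<dots> \<le> \<rho> ^ n * norm z ^ n / fact n"
      using matpow_bound[of X n i j] unfolding \<rho>_def
      by (intro divide_right_mono mult_right_mono) auto
    also have "\<dots> = inverse (fact n) * (\<rho> * norm z) ^ n"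
      by (simp add: power_mult_distrib field_simps)
    finally show ?thesis .
  qed
  show ?thesis by (rule summable_comparison_test'[OF sg, of 0]) (rule bnd)
qed

lemma ES_nth: "ES X z $ i $ j = (\<Sum>n. mc X i j n * z ^ n)"
  by (simp add: ES_def)

lemma mm_ES_entry: "(X ** ES X z) $ i $ j = (\<Sum>n. matpow X (Suc n) $ i $ j / of_nat (fact n) * z ^ n)"
proof -
  have "(X ** ES X z) $ i $ j = (\<Sum>l\<in>UNIV. X $ i $ l * (\<Sum>n. mc X l j n * z ^ n))"
    by (simp add: matrix_matrix_mult_def ES_nth)
  also have "\<dots> = (\<Sum>l\<in>UNIV. \<Sum>n. X $ i $ l * (mc X l j n * z ^ n))"
    by (simp add: suminf_mult[OF mc_summable])
  also have "\<dots> = (\<Sum>n. \<Sum>l\<in>UNIV. X $ i $ l * (mc X l j n * z ^ n))"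
    by (rule suminf_sum[symmetric]) (intro summable_mult mc_summable)
  also have "\<dots> = (\<Sum>n. matpow X (Suc n) $ i $ j / of_nat (fact n) * z ^ n)"
    by (rule suminf_cong) (simp add: mc_def matpow_Suc matrix_matrix_mult_def sum_divide_distrib sum_distrib_left sum_distrib_right mult_ac)
  finally show ?thesis .
qed

lemma ES_mm_entry: "(ES X z ** X) $ i $ j = (\<Sum>n. matpow X (Suc n) $ i $ j / of_nat (fact n) * z ^ n)"
proof -
  have "(ES X z ** X) $ i $ j = (\<Sum>l\<in>UNIV. (\<Sum>n. mc X i l n * z ^ n) * X $ l $ j)"
    by (simp add: matrix_matrix_mult_def ES_nth)
  also have "\<dots> = (\<Sum>l\<in>UNIV. \<Sum>n. mc X i l n * z ^ n * X $ l $ j)"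
    by (simp add: suminf_mult2[OF mc_summable])
  also have "\<dots> = (\<Sum>n. \<Sum>l\<in>UNIV. mc X i l n * z ^ n * X $ l $ j)"
    by (rule suminf_sum[symmetric]) (intro summable_mult2 mc_summable)
  also have "\<dots> = (\<Sum>n. matpow X (Suc n) $ i $ j / of_nat (fact n) * z ^ n)"
    by (rule suminf_cong) (simp add: mc_def matpow_Suc' matrix_matrix_mult_def sum_divide_distrib sum_distrib_left sum_distrib_right mult_ac)
  finally show ?thesis .
qed

lemma ES_comm: "X ** ES X z = ES X z ** X"
  by (simp add: vec_eq_iff mm_ES_entry ES_mm_entry)

lemma ES_0: "ES X 0 = mat 1"
  by (simp add: vec_eq_iff ES_nth) (simp add: mc_def mat_def)

lemma ES_deriv_entry:
  "((\<lambda>z. \<Sum>n. mc X i j n * z ^ n) has_field_derivative (X ** ES X z) $ i $ j) (at z)"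
proof -
  have "((\<lambda>z. \<Sum>n. mc X i j n * z ^ n) has_field_derivative (\<Sum>n. diffs (mc X i j) n * z ^ n)) (at z)"
    by (rule termdiffs_strong_converges_everywhere[OF mc_summable])
  moreover have "diffs (mc X i j) n = matpow X (Suc n) $ i $ j / of_nat (fact n)" for n
  proof -
    have gen: "k \<noteq> 0 \<Longrightarrow> k * (M / (k * f)) = M / f" for k M f :: complex
      by (cases "f = 0") (simp_all add: field_simps)
    have f: "(of_nat (fact (Suc n)) :: complex) = of_nat (Suc n) * of_nat (fact n)"
      by (simp only: fact_Suc of_nat_mult of_nat_id)
    show ?thesis unfolding diffs_def mc_def f
      by (rule gen) (simp del: of_nat_Suc)
  qed
  ultimately show ?thesis by (simp add: mm_ES_entry)
qed

lemma ES_deriv: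
  "((\<lambda>t. ES X (complex_of_real t)) has_vector_derivative X ** ES X (complex_of_real t)) (at t within s)"
proof (rule hvd_vec, rule hvd_vec)
  fix i j
  show "((\<lambda>t. ES X (complex_of_real t) $ i $ j) has_vector_derivative (X ** ES X (complex_of_real t)) $ i $ j) (at t within s)"
    unfolding ES_nth by (rule has_vector_derivative_real_field[OF ES_deriv_entry])
qed


lemma hvd_zero_const:
  fixes f :: "real \<Rightarrow> 'a::real_normed_vector"
  assumes "convex S" "\<And>x. x \<in> S \<Longrightarrow> (f has_vector_derivative 0) (at x within S)" "x0 \<in> S" "x \<in> S"
  shows "f x = f x0"
proof -
  have "\<exists>c. \<forall>x\<in>S. f x = c"
    by (rule has_derivative_zero_constant[OF assms(1)]) (use assms(2) in \<open>auto simp: has_vector_derivative_def\<close>)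
  then show ?thesis using assms(3,4) by auto
qed

lemma ES_inv: "ES X (complex_of_real (- t)) ** ES X (complex_of_real t) = mat 1"
proof -
  define E where "E t = ES X (complex_of_real t)" for t
  have dE: "(E has_vector_derivative X ** E t) (at t)" for t
    unfolding E_def by (rule ES_deriv)
  have dEm: "((\<lambda>t. E (- t)) has_vector_derivative - (X ** E (- t))) (at t)" for t
  proof -
    have df: "((\<lambda>t. - t) has_vector_derivative -1) (at t)" by (auto intro!: derivative_eq_intros)
    have "((E \<circ> (\<lambda>t. - t)) has_vector_derivative (-1) *\<^sub>R (X ** E (- t))) (at t)"
      by (rule vector_diff_chain_at[OF df dE])
    then show ?thesis by (simp add: o_def)
  qed
  have d: "((\<lambda>t. E (- t) ** E t) has_vector_derivative 0) (at t within UNIV)" for t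
  proof -
    have "((\<lambda>t. E (- t) ** E t) has_vector_derivative (E (- t) ** (X ** E t) + (- (X ** E (- t))) ** E t)) (at t within UNIV)"
      by (rule bounded_bilinear.has_vector_derivative[OF bb_mm]) (use dEm dE in auto)
    moreover have "E (- t) ** (X ** E t) + (- (X ** E (- t))) ** E t = 0"
    proof -
      have "X ** E (- t) = E (- t) ** X" unfolding E_def by (rule ES_comm)
      then show ?thesis by (simp add: mm_minus_left matrix_mul_assoc)
    qed
    ultimately show ?thesis by simp
  qed
  have "E (- t) ** E t = E (- 0) ** E 0"
    by (rule hvd_zero_const[where f="\<lambda>t. E (- t) ** E t" and S=UNIV]) (use d in auto)
  also have "\<dots> = mat 1" by (simp add: E_def ES_0)
  finally show ?thesis by (simp add: E_def)
qed

lemma ES_inv': "ES X (complex_of_real t) ** ES X (complex_of_real (- t)) = mat 1"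
  using ES_inv[of X "- t"] by simp

lemma scaleR_cvec': "r *\<^sub>R (v::complex^'m) = complex_of_real r *s v"
  unfolding vec_eq_iff by (simp add: scaleR_conv_of_real[where 'a=complex])

lemma vsub_real: "vec.subspace (V :: (complex^'n) set) \<Longrightarrow> subspace V"
  unfolding subspace_def using vec.subspace_0 vec.subspace_add vec.subspace_scale
  by (auto simp: scaleR_cvec')

lemma ES_subspace:
  assumes V: "vec.subspace V" and XV: "\<And>v. v \<in> V \<Longrightarrow> X *v v \<in> V" and v: "v \<in> V"
  shows "ES X z *v v \<in> V"
proof -
  have pv: "matpow X n *v v \<in> V" for n
  proof (induction n)
    case 0 then show ?case using v by simp
  next
    case (Suc n) then show ?case using XV by (simp add: matpow_Suc matrix_vector_mul_assoc[symmetric])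
  qed
  define SN where "SN N = (\<Sum>n<N. (z ^ n / of_nat (fact n)) *s (matpow X n *v v))" for N
  have SNV: "SN N \<in> V" for N
    unfolding SN_def by (intro vec.subspace_sum[OF V] vec.subspace_scale[OF V] pv)
  have SN_eq: "SN N = (\<chi> i. \<Sum>j\<in>UNIV. (\<Sum>n<N. mc X i j n * z ^ n) * v $ j)" for N
    unfolding SN_def
    by (simp add: vec_eq_iff sum_component matrix_vector_mult_def mc_def sum_distrib_left sum_distrib_right
        mult_ac sum.swap[of _ "{..<N}"])
  have ES_eq: "ES X z *v v = (\<chi> i. \<Sum>j\<in>UNIV. (\<Sum>n. mc X i j n * z ^ n) * v $ j)"
    by (simp add: vec_eq_iff matrix_vector_mult_def ES_nth)
  have "SN \<longlonglongrightarrow> ES X z *v v"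
    unfolding SN_eq ES_eq
    by (intro tendsto_vec_lambda tendsto_sum tendsto_mult_right summable_LIMSEQ mc_summable)
  then show ?thesis
    by (rule closed_sequentially[OF closed_subspace[OF vsub_real[OF V]] SNV])
qed


lemma ES_deriv_neg:
  "((\<lambda>t. ES X (complex_of_real (- t))) has_vector_derivative - (X ** ES X (complex_of_real (- t)))) (at t)"
proof -
  have df: "((\<lambda>t. - t) has_vector_derivative -1) (at t)" by (auto intro!: derivative_eq_intros)
  have "(((\<lambda>s. ES X (complex_of_real s)) \<circ> (\<lambda>t. - t)) has_vector_derivative (-1) *\<^sub>R (X ** ES X (complex_of_real (- t)))) (at t)"
    by (rule vector_diff_chain_at[OF df ES_deriv])
  then show ?thesis by (simp add: o_def)
qed

lemma cscaleM_mm_left: "cscaleM c A ** B = cscaleM c (A ** B)"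
  by (simp add: cscaleM_def vec_eq_iff matrix_matrix_mult_def sum_distrib_left mult_ac)

lemma cscaleM_mm_right: "A ** cscaleM c B = cscaleM c (A ** B)"
  by (simp add: cscaleM_def vec_eq_iff matrix_matrix_mult_def sum_distrib_left mult_ac)

lemma cscaleM_mat: "cscaleM c X = mat c ** X"
  by (simp add: vec_eq_iff cscaleM_def matrix_matrix_mult_def mat_def if_distrib if_distribR cong: if_cong)

lemma minv_eq:
  fixes A B :: "complex^'n^'n"
  assumes "A ** B = mat 1"
  shows "matrix_inv A = B"
proof -
  have BA: "B ** A = mat 1" using assms matrix_left_right_inverse by blast
  have ex: "\<exists>C. A ** C = mat 1 \<and> C ** A = mat 1" using assms BA by blast
  define C where "C = matrix_inv A"
  have C: "A ** C = mat 1 \<and> C ** A = mat 1"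
    unfolding C_def matrix_inv_def by (rule someI_ex[OF ex])
  have "C = C ** (A ** B)" using assms by simp
  also have "\<dots> = (C ** A) ** B" by (simp add: matrix_mul_assoc)
  also have "\<dots> = B" using C by simp
  finally show ?thesis unfolding C_def .
qed

lemma act_mm: "act (A ** B) F = act A (act B F)"
  unfolding act_def by (simp add: image_image matrix_vector_mul_assoc fun_eq_iff)

(* ---- PartD ---- *)
context dsetting
begin

lemma bb_Q: "bounded_bilinear (Q k)"
proof -
  note B = Qbil[of k]
  have "bilinear (Q k)"
    unfolding bilinear_def
  proof (intro conjI allI)
    fix x y
    show "linear (Q k x)"
      by (rule linearI) (simp_all add: cbil_addr[OF B] scaleR_cvec' cbil_scaler[OF B] scaleR_conv_of_real)
    show "linear (\<lambda>x. Q k x y)"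
      by (rule linearI) (simp_all add: cbil_addl[OF B] scaleR_cvec' cbil_scalel[OF B] scaleR_conv_of_real)
  qed
  then show ?thesis by (simp add: bilinear_conv_bounded_bilinear)
qed

lemma Qpres_path:
  fixes G C :: "real \<Rightarrow> complex^'n^'n"
  assumes T: "convex T" "t0 \<in> T" and G0: "G t0 = mat 1"
    and dG: "\<And>t. t \<in> T \<Longrightarrow> (G has_vector_derivative C t ** G t) (at t within T)"
    and C: "\<And>t. t \<in> T \<Longrightarrow> C t \<in> gClie W Q" and GS: "\<And>t. t \<in> T \<Longrightarrow> G t \<in> SW"
    and t: "t \<in> T" and x: "x \<in> W k" and z: "z \<in> W k"
  shows "Q k (G t *v x) (G t *v z) = Q k x z"
proof -
  interpret bq: bounded_bilinear "Q k" by (rule bb_Q)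
  interpret bv: bounded_bilinear "\<lambda>(A::complex^'n^'n) (v::complex^'n). A *v v" by (rule bb_mv)
  have dv: "((\<lambda>t. G t *v v) has_vector_derivative (C t ** G t) *v v) (at t within T)" if "t \<in> T" for t v
    using bv.has_vector_derivative[OF dG[OF that] has_vector_derivative_const[of v]] by simp
  have d0: "((\<lambda>t. Q k (G t *v x) (G t *v z)) has_vector_derivative 0) (at t within T)" if tT: "t \<in> T" for t
  proof -
    have "((\<lambda>t. Q k (G t *v x) (G t *v z)) has_vector_derivative
        Q k (G t *v x) ((C t ** G t) *v z) + Q k ((C t ** G t) *v x) (G t *v z)) (at t within T)"
      by (rule bq.has_vector_derivative[OF dv[OF tT] dv[OF tT]])
    moreover have "Q k (G t *v x) ((C t ** G t) *v z) + Q k ((C t ** G t) *v x) (G t *v z) = 0"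
    proof -
      have "G t *v x \<in> W k" "G t *v z \<in> W k" using GS[OF tT] x z unfolding SW_def by auto
      then have "Q k (C t *v (G t *v x)) (G t *v z) + Q k (G t *v x) (C t *v (G t *v z)) = 0"
        using C[OF tT] unfolding gClie_def by blast
      then show ?thesis by (simp add: matrix_vector_mul_assoc[symmetric] add.commute)
    qed
    ultimately show ?thesis by simp
  qed
  have "Q k (G t *v x) (G t *v z) = Q k (G t0 *v x) (G t0 *v z)"
    by (rule hvd_zero_const[where f="\<lambda>t. Q k (G t *v x) (G t *v z)", OF T(1) d0 T(2) t])
  then show ?thesis using G0 by simp
qed


lemma main:
  fixes \<beta> :: "real \<Rightarrow> complex^'n^'n" and a :: real
  assumes beta_h: "\<forall>y>a. \<beta> y \<in> hlie W Q"
    and lax: "\<forall>y>a. (\<beta> has_vector_derivative - lie_bracket (\<beta> y) (Lop I (\<beta> y))) (at y)"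
  shows "\<exists>(h :: real \<Rightarrow> complex^'n^'n) Nt Ft.
           Nt \<in> hlie W Q \<and> Ft \<in> Mcheck W Q d \<and>
           (\<forall>y>a. h y \<in> Hgrp W Q \<and>
              (\<exists>h'. (h has_vector_derivative h') (at y) \<and>
                    matrix_inv (h y) ** h' = - Lop I (\<beta> y)) \<and>
              \<beta> y = matrix_inv (h y) ** Nt ** h y \<and>
              act (h y) Fo = act (mexp (cscaleM (\<i> * of_real y) Nt)) Ft)"
proof -
  interpret mm: bounded_bilinear "\<lambda>(A::complex^'n^'n) (B::complex^'n^'n). A ** B" by (rule bb_mm)
  define y0 where "y0 = a + 1"
  have y0: "a < y0" by (simp add: y0_def)
  have cvx: "convex {a<..}" unfolding is_interval_convex_1[symmetric] is_interval_1 by auto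
  define A where "A y = Lop I (\<beta> y)" for y
  have Ah: "A y \<in> hlie W Q" if "a < y" for y using Lop_h beta_h that unfolding A_def by blast
  have ASH: "A y \<in> SH" if "a < y" for y using Ah[OF that] h_SH by blast
  have AgC: "A y \<in> gClie W Q" if "a < y" for y using Ah[OF that] h_gC by blast
  have bc: "continuous_on {a<..} \<beta>"
    by (rule continuous_at_imp_continuous_on) (use lax in \<open>auto intro: has_vector_derivative_continuous\<close>)
  have Lc: "continuous_on UNIV (Lop I)"
    by (rule linear_continuous_on) (simp add: linear_conv_bounded_linear[symmetric] Lop_linear)
  have Ac: "continuous_on {a<..} A"
    unfolding A_def by (rule continuous_on_compose2[OF Lc bc]) auto
  \<comment> \<open>the function h\<close>
  have "\<exists>u. u y0 = mat 1 \<and> (\<forall>y>a. u y \<in> SH \<and> (u has_vector_derivative u y ** (- A y)) (at y))"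
  proof (rule ode_global[OF bb_mm y0])
    show "continuous_on {a<..} (\<lambda>y. - A y)" by (rule continuous_on_minus[OF Ac])
    show "subspace SH" by (rule SH_subspace)
    show "mat 1 \<in> SH" by (rule one_SH)
    show "x ** - A y \<in> SH" if "x \<in> SH" "a < y" for x y
      using SH_mult[OF that(1) subspace_neg[OF SH_subspace ASH[OF that(2)]]] .
  qed
  then obtain h where h0: "h y0 = mat 1" and hS: "\<And>y. a < y \<Longrightarrow> h y \<in> SH"
    and dh: "\<And>y. a < y \<Longrightarrow> (h has_vector_derivative h y ** (- A y)) (at y)" by blast
  \<comment> \<open>its inverse g\<close>
  have "\<exists>u. u y0 = mat 1 \<and> (\<forall>y>a. u y \<in> SH \<and> (u has_vector_derivative A y ** u y) (at y))"
  proof (rule ode_global[OF bb_mm_flip y0])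
    show "continuous_on {a<..} A" by (rule Ac)
    show "subspace SH" by (rule SH_subspace)
    show "mat 1 \<in> SH" by (rule one_SH)
    show "A y ** x \<in> SH" if "x \<in> SH" "a < y" for x y
      using SH_mult[OF ASH[OF that(2)] that(1)] .
  qed
  then obtain g where g0: "g y0 = mat 1" and gS: "\<And>y. a < y \<Longrightarrow> g y \<in> SH"
    and dg: "\<And>y. a < y \<Longrightarrow> (g has_vector_derivative A y ** g y) (at y)" by blast
  have dh': "(h has_vector_derivative h y ** (- A y)) (at y within {a<..})" if "y \<in> {a<..}" for y
    using has_vector_derivative_at_within[OF dh] that by simp
  have dg': "(g has_vector_derivative A y ** g y) (at y within {a<..})" if "y \<in> {a<..}" for y
    using has_vector_derivative_at_within[OF dg] that by simp
  have hg: "h y ** g y = mat 1" if "a < y" for y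
  proof -
    have d: "((\<lambda>y. h y ** g y) has_vector_derivative 0) (at y within {a<..})" if "y \<in> {a<..}" for y
    proof -
      have "((\<lambda>y. h y ** g y) has_vector_derivative h y ** (A y ** g y) + (h y ** (- A y)) ** g y) (at y within {a<..})"
        by (rule mm.has_vector_derivative[OF dh'[OF that] dg'[OF that]])
      then show ?thesis by (simp add: mm_minus_left mm_minus_right matrix_mul_assoc)
    qed
    have "h y ** g y = h y0 ** g y0"
      by (rule hvd_zero_const[where f="\<lambda>y. h y ** g y", OF cvx d]) (use y0 that in auto)
    then show ?thesis using h0 g0 by simp
  qed
  have gh: "g y ** h y = mat 1" if "a < y" for y
    using hg[OF that] matrix_left_right_inverse by blast
  have minv: "matrix_inv (h y) = g y" if "a < y" for y by (rule minv_eq[OF hg[OF that]])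
  \<comment> \<open>conservation of h beta g\<close>
  define Nt where "Nt = \<beta> y0"
  have Nth: "Nt \<in> hlie W Q" using beta_h y0 unfolding Nt_def by blast
  have db: "(\<beta> has_vector_derivative - lie_bracket (\<beta> y) (A y)) (at y within {a<..})" if "y \<in> {a<..}" for y
    using has_vector_derivative_at_within[of \<beta>] lax that unfolding A_def by auto
  have psi: "h y ** \<beta> y ** g y = Nt" if "a < y" for y
  proof -
    have d: "((\<lambda>y. h y ** \<beta> y ** g y) has_vector_derivative 0) (at y within {a<..})" if yy: "y \<in> {a<..}" for y
    proof -
      have dF: "((\<lambda>y. h y ** \<beta> y) has_vector_derivative
          h y ** (- lie_bracket (\<beta> y) (A y)) + (h y ** (- A y)) ** \<beta> y) (at y within {a<..})"
        by (rule mm.has_vector_derivative[OF dh'[OF yy] db[OF yy]])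
      have "((\<lambda>y. h y ** \<beta> y ** g y) has_vector_derivative
          (h y ** \<beta> y) ** (A y ** g y) + (h y ** (- lie_bracket (\<beta> y) (A y)) + (h y ** (- A y)) ** \<beta> y) ** g y)
          (at y within {a<..})"
        by (rule mm.has_vector_derivative[OF dF dg'[OF yy]])
      moreover have "(h y ** \<beta> y) ** (A y ** g y) + (h y ** (- lie_bracket (\<beta> y) (A y)) + (h y ** (- A y)) ** \<beta> y) ** g y = 0"
        by (simp add: lie_bracket_def mm_minus_left mm_minus_right mm_diff_left mm_diff_right mm_add_left
            matrix_mul_assoc)
      ultimately show ?thesis by simp
    qed
    have "h y ** \<beta> y ** g y = h y0 ** \<beta> y0 ** g y0"
      by (rule hvd_zero_const[where f="\<lambda>y. h y ** \<beta> y ** g y", OF cvx d]) (use y0 that in auto)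
    then show ?thesis using h0 g0 unfolding Nt_def by simp
  qed
  have beta_eq: "\<beta> y = g y ** Nt ** h y" if "a < y" for y
  proof -
    have "g y ** Nt ** h y = (g y ** h y) ** \<beta> y ** (g y ** h y)"
      unfolding psi[OF that, symmetric] by (simp add: matrix_mul_assoc)
    then show ?thesis using gh[OF that] by simp
  qed
  have Nth_eq: "Nt ** h y = h y ** \<beta> y" if "a < y" for y
  proof -
    have "Nt ** h y = h y ** \<beta> y ** (g y ** h y)"
      unfolding psi[OF that, symmetric] by (simp add: matrix_mul_assoc)
    then show ?thesis using gh[OF that] by simp
  qed
  \<comment> \<open>h y lies in H\<close>
  have Qg: "Q k (g y *v x) (g y *v z) = Q k x z" if "a < y" "x \<in> W k" "z \<in> W k" for y k x z
    by (rule Qpres_path[OF cvx _ g0 dg']) (use y0 AgC gS SH_SW that in auto)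
  have hH: "h y \<in> Hgrp W Q" if "a < y" for y
  proof -
    have inv: "invertible (h y)" unfolding invertible_def using hg[OF that] gh[OF that] by blast
    have hW: "h y *v x \<in> W k" if "x \<in> W k" for k x using hS[OF \<open>a < y\<close>] that unfolding SH_def by blast
    have hQ: "Q k (h y *v x) (h y *v z) = Q k x z" if "x \<in> W k" "z \<in> W k" for k x z
    proof -
      have "Q k (g y *v (h y *v x)) (g y *v (h y *v z)) = Q k (h y *v x) (h y *v z)"
        by (rule Qg[OF \<open>a < y\<close> hW[OF that(1)] hW[OF that(2)]])
      then show ?thesis using gh[OF \<open>a < y\<close>] by (simp add: matrix_vector_mul_assoc)
    qed
    have r2: "cnjv (h y *v x) - h y *v cnjv x \<in> W (k - 2)" if "x \<in> W k" for k x
      using hS[OF \<open>a < y\<close>] that unfolding SH_def by blast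
    have r1: "cnjv (h y *v x) - h y *v cnjv x \<in> W (k - 1)" if "x \<in> W k" for k x
      using W_mono[OF _ r2[OF that]] by simp
    show ?thesis unfolding Hgrp_def Ggrp_def GCgrp_def using inv hW hQ r1 r2 by blast
  qed
  \<comment> \<open>the exponential\<close>
  define X0 where "X0 = cscaleM \<i> Nt"
  define E where "E t = ES X0 (complex_of_real t)" for t
  have X0gC: "X0 \<in> gClie W Q" unfolding X0_def using gC_cscale Nth h_gC by blast
  have EW: "E t *v x \<in> W k" if "x \<in> W k" for t k x
    unfolding E_def by (rule ES_subspace[OF W_sub]) (use X0gC that in \<open>auto simp: gClie_def\<close>)
  have E0: "E 0 = mat 1" by (simp add: E_def ES_0)
  have dE: "(E has_vector_derivative X0 ** E t) (at t within UNIV)" for t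
    unfolding E_def by (rule ES_deriv)
  have EQ: "Q k (E t *v x) (E t *v z) = Q k x z" if "x \<in> W k" "z \<in> W k" for t k x z
    by (rule Qpres_path[OF convex_UNIV _ E0 dE]) (use X0gC EW that in \<open>auto simp: SW_def\<close>)
  have EGC: "E t \<in> GCgrp W Q" for t
  proof -
    have "invertible (E t)" unfolding invertible_def E_def using ES_inv[of X0 t] ES_inv'[of X0 t] by blast
    then show ?thesis unfolding GCgrp_def using EW EQ by blast
  qed
  have Einv: "E t ** E (- t) = mat 1" for t unfolding E_def by (rule ES_inv')
  have dEm: "((\<lambda>t. E (- t)) has_vector_derivative - (X0 ** E (- t))) (at t)" for t
    unfolding E_def by (rule ES_deriv_neg)
  have mexpE: "mexp (cscaleM (\<i> * of_real y) Nt) = E y" for y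
    unfolding E_def X0_def by (rule mexp_ES)
  \<comment> \<open>the stabiliser part\<close>
  define Z where "Z y = - (cscaleM \<i> (\<beta> y) + A y)" for y
  have ZS: "Z y \<in> SPF" if "a < y" for y
    unfolding Z_def A_def by (rule subspace_neg[OF SPF_subspace Lop_SPF])
  have Zc: "continuous_on {a<..} Z"
  proof -
    have "continuous_on {a<..} (\<lambda>y. mat \<i> ** \<beta> y)"
      by (rule mm.continuous_on[OF continuous_on_const bc])
    then have "continuous_on {a<..} (\<lambda>y. cscaleM \<i> (\<beta> y))" by (simp add: cscaleM_mat)
    then show ?thesis unfolding Z_def by (intro continuous_on_minus continuous_on_add Ac)
  qed
  have "\<exists>u. u y0 = mat 1 \<and> (\<forall>y>a. u y \<in> SPF \<and> (u has_vector_derivative u y ** Z y) (at y))"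
  proof (rule ode_global[OF bb_mm y0 Zc SPF_subspace one_SPF])
    show "x ** Z y \<in> SPF" if "x \<in> SPF" "a < y" for x y using SPF_mult[OF that(1) ZS[OF that(2)]] .
  qed
  then obtain \<rho> where r0: "\<rho> y0 = mat 1" and rS: "\<And>y. a < y \<Longrightarrow> \<rho> y \<in> SPF"
    and dr: "\<And>y. a < y \<Longrightarrow> (\<rho> has_vector_derivative \<rho> y ** Z y) (at y)" by blast
  have "\<exists>u. u y0 = mat 1 \<and> (\<forall>y>a. u y \<in> SPF \<and> (u has_vector_derivative (- Z y) ** u y) (at y))"
  proof (rule ode_global[OF bb_mm_flip y0 continuous_on_minus[OF Zc] SPF_subspace one_SPF])
    show "(- Z y) ** x \<in> SPF" if "x \<in> SPF" "a < y" for x y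
      using SPF_mult[OF subspace_neg[OF SPF_subspace ZS[OF that(2)]] that(1)] .
  qed
  then obtain \<sigma> where s0: "\<sigma> y0 = mat 1" and sS: "\<And>y. a < y \<Longrightarrow> \<sigma> y \<in> SPF"
    and ds: "\<And>y. a < y \<Longrightarrow> (\<sigma> has_vector_derivative (- Z y) ** \<sigma> y) (at y)" by blast
  have dr': "(\<rho> has_vector_derivative \<rho> y ** Z y) (at y within {a<..})" if "y \<in> {a<..}" for y
    using has_vector_derivative_at_within[OF dr] that by simp
  have ds': "(\<sigma> has_vector_derivative (- Z y) ** \<sigma> y) (at y within {a<..})" if "y \<in> {a<..}" for y
    using has_vector_derivative_at_within[OF ds] that by simp
  have rs: "\<rho> y ** \<sigma> y = mat 1" if "a < y" for y
  proof -
    have d: "((\<lambda>y. \<rho> y ** \<sigma> y) has_vector_derivative 0) (at y within {a<..})" if "y \<in> {a<..}" for y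
    proof -
      have "((\<lambda>y. \<rho> y ** \<sigma> y) has_vector_derivative \<rho> y ** ((- Z y) ** \<sigma> y) + (\<rho> y ** Z y) ** \<sigma> y) (at y within {a<..})"
        by (rule mm.has_vector_derivative[OF dr'[OF that] ds'[OF that]])
      then show ?thesis by (simp add: mm_minus_left mm_minus_right matrix_mul_assoc)
    qed
    have "\<rho> y ** \<sigma> y = \<rho> y0 ** \<sigma> y0"
      by (rule hvd_zero_const[where f="\<lambda>y. \<rho> y ** \<sigma> y", OF cvx d]) (use y0 that in auto)
    then show ?thesis using r0 s0 by simp
  qed
  have sr: "\<sigma> y ** \<rho> y = mat 1" if "a < y" for y
    using rs[OF that] matrix_left_right_inverse by blast
  have actr: "act (\<rho> y) Fo = Fo" if "a < y" for y
  proof -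
    have "(\<lambda>v. \<rho> y *v v) ` Fo p = Fo p" for p
    proof
      show "(\<lambda>v. \<rho> y *v v) ` Fo p \<subseteq> Fo p" using rS[OF that] unfolding SPF_def by blast
      show "Fo p \<subseteq> (\<lambda>v. \<rho> y *v v) ` Fo p"
      proof
        fix v assume v: "v \<in> Fo p"
        have "v = \<rho> y *v (\<sigma> y *v v)" using rs[OF that] by (simp add: matrix_vector_mul_assoc)
        moreover have "\<sigma> y *v v \<in> Fo p" using sS[OF that] v unfolding SPF_def by blast
        ultimately show "v \<in> (\<lambda>v. \<rho> y *v v) ` Fo p" by blast
      qed
    qed
    then show ?thesis unfolding act_def by auto
  qed
  \<comment> \<open>q y = E(-y) h(y)\<close>
  define q where "q y = E (- y) ** h y" for y
  have dq: "(q has_vector_derivative q y ** Z y) (at y within {a<..})" if yy: "y \<in> {a<..}" for y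
  proof -
    have "(q has_vector_derivative E (- y) ** (h y ** (- A y)) + (- (X0 ** E (- y))) ** h y) (at y within {a<..})"
      unfolding q_def
      by (rule mm.has_vector_derivative[OF has_vector_derivative_at_within[OF dEm] dh'[OF yy]])
    moreover have "E (- y) ** (h y ** (- A y)) + (- (X0 ** E (- y))) ** h y = q y ** Z y"
    proof -
      have c: "X0 ** E (- y) = E (- y) ** X0" unfolding E_def by (rule ES_comm)
      have k: "X0 ** h y = h y ** cscaleM \<i> (\<beta> y)"
        using Nth_eq[of y] yy by (simp add: X0_def cscaleM_mm_left cscaleM_mm_right)
      have "(- (X0 ** E (- y))) ** h y = - (E (- y) ** (h y ** cscaleM \<i> (\<beta> y)))"
        by (simp add: c mm_minus_left matrix_mul_assoc[symmetric] k)
      then show ?thesis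
        by (simp add: q_def Z_def mm_minus_right mm_add_right mm_diff_right matrix_mul_assoc)
    qed
    ultimately show ?thesis by simp
  qed
  have qrho: "q y = E (- y0) ** \<rho> y" if "a < y" for y
  proof -
    have d: "((\<lambda>y. q y ** \<sigma> y) has_vector_derivative 0) (at y within {a<..})" if "y \<in> {a<..}" for y
    proof -
      have "((\<lambda>y. q y ** \<sigma> y) has_vector_derivative q y ** ((- Z y) ** \<sigma> y) + (q y ** Z y) ** \<sigma> y) (at y within {a<..})"
        by (rule mm.has_vector_derivative[OF dq[OF that] ds'[OF that]])
      then show ?thesis by (simp add: mm_minus_left mm_minus_right matrix_mul_assoc)
    qed
    have "q y ** \<sigma> y = q y0 ** \<sigma> y0"
      by (rule hvd_zero_const[where f="\<lambda>y. q y ** \<sigma> y", OF cvx d]) (use y0 that in auto)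
    then have "q y ** \<sigma> y = E (- y0)" using h0 s0 by (simp add: q_def)
    then have "q y ** (\<sigma> y ** \<rho> y) = E (- y0) ** \<rho> y" by (simp add: matrix_mul_assoc)
    then show ?thesis using sr[OF that] by simp
  qed
  have hEq: "h y = E y ** (E (- y0) ** \<rho> y)" if "a < y" for y
  proof -
    have "E y ** q y = (E y ** E (- y)) ** h y" by (simp add: q_def matrix_mul_assoc)
    then have "E y ** q y = h y" using Einv[of y] by simp
    then show ?thesis using qrho[OF that] by simp
  qed
  define Ft where "Ft = act (E (- y0)) Fo"
  have FtM: "Ft \<in> Mcheck W Q d" unfolding Ft_def Mcheck_def using EGC Fo by blast
  have actEq: "act (h y) Fo = act (mexp (cscaleM (\<i> * of_real y) Nt)) Ft" if "a < y" for y
    unfolding hEq[OF that] mexpE Ft_def act_mm actr[OF that] ..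
  \<comment> \<open>conclusion\<close>
  have "\<forall>y>a. h y \<in> Hgrp W Q \<and>
              (\<exists>h'. (h has_vector_derivative h') (at y) \<and>
                    matrix_inv (h y) ** h' = - Lop I (\<beta> y)) \<and>
              \<beta> y = matrix_inv (h y) ** Nt ** h y \<and>
              act (h y) Fo = act (mexp (cscaleM (\<i> * of_real y) Nt)) Ft"
  proof (intro allI impI conjI)
    fix y assume y: "a < y"
    show "h y \<in> Hgrp W Q" by (rule hH[OF y])
    have "matrix_inv (h y) ** (h y ** (- A y)) = - A y"
      unfolding minv[OF y] by (simp add: matrix_mul_assoc gh[OF y])
    then show "\<exists>h'. (h has_vector_derivative h') (at y) \<and> matrix_inv (h y) ** h' = - Lop I (\<beta> y)"
      using dh[OF y] unfolding A_def by blast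
    show "\<beta> y = matrix_inv (h y) ** Nt ** h y" unfolding minv[OF y] by (rule beta_eq[OF y])
    show "act (h y) Fo = act (mexp (cscaleM (\<i> * of_real y) Nt)) Ft" by (rule actEq[OF y])
  qed
  then show ?thesis using Nth FtM by blast
qed

end

theorem theorem7p1:
  fixes W :: "int \<Rightarrow> (complex^'n) set"
    and Q :: "int \<Rightarrow> complex^'n \<Rightarrow> complex^'n \<Rightarrow> complex"
    and d :: "int \<Rightarrow> nat"
    and Fo :: "int \<Rightarrow> (complex^'n) set"
    and I :: "int \<Rightarrow> int \<Rightarrow> (complex^'n) set"
    and \<beta> :: "real \<Rightarrow> complex^'n^'n"
    and a :: real
  assumes W: "rational_inc_filtration W"
    and Q: "graded_polarization W Q"
    and Fo: "Fo \<in> Mset W Q d"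
    and I: "deligne_bigrading Fo W I"
    and split: "split_over_R I"
    and beta_h: "\<forall>y>a. \<beta> y \<in> hlie W Q"
    and lax: "\<forall>y>a. (\<beta> has_vector_derivative - lie_bracket (\<beta> y) (Lop I (\<beta> y))) (at y)"
  shows "\<exists>(h :: real \<Rightarrow> complex^'n^'n) Nt Ft.
           Nt \<in> hlie W Q \<and> Ft \<in> Mcheck W Q d \<and>
           (\<forall>y>a. h y \<in> Hgrp W Q \<and>
              (\<exists>h'. (h has_vector_derivative h') (at y) \<and>
                    matrix_inv (h y) ** h' = - Lop I (\<beta> y)) \<and>
              \<beta> y = matrix_inv (h y) ** Nt ** h y \<and>
              act (h y) Fo = act (mexp (cscaleM (\<i> * of_real y) Nt)) Ft)"
proof -
  interpret dsetting W Q d Fo I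
    by unfold_locales (fact W Q Fo I split)+
  show ?thesis by (rule main[OF beta_h lax])
qed

end
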